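(* Let $\lambda \in P$. For every $\lhd \in \mathrm{RO}(\lambda, \Delta^{+})$ the total order $\prec_{\lhd}$ on $w(\lambda)\Delta^{+}$ belongs to $\mathrm{RO}(\lambda, w(\lambda)\Delta^{+})$, and the assignment $\lhd \mapsto \prec_{\lhd}$ is a bijection from $\mathrm{RO}(\lambda, \Delta^{+})$ onto $\mathrm{RO}(\lambda, w(\lambda)\Delta^{+})$.
   Context: Let $\mathfrak{g}$ be a finite-dimensional complex simple Lie algebra with root system $\Delta$, positive roots $\Delta^{+}$, Weyl group $W$ (with Bruhat order), weight lattice $P$, and pairing $\langle\cdot,\cdot\rangle$; $\alpha^\vee$ is the coroot of $\alpha$. For $\lambda \in P$ set $\Delta^{+}(\lambda)_{>0}$, $\Delta^{+}(\lambda)_{=0}$, $\Delta^{+}(\lambda)_{<0}$ to be the sets of $\alpha \in \Delta^{+}$ with $\langle \lambda, \alpha^{\vee}\rangle$ respectively $>0$, $=0$, $<0$. Let $\lambda_{+}$ be the dominant weight in $W\lambda$ and $w(\lambda)$ the Bruhat-maximal element of $\{w \in W \mid w\lambda_{+} = \lambda\}$; one has $w(\lambda)\Delta^{+} = \Delta^{+}(\lambda)_{>0} \sqcup (-\Delta^{+}(\lambda)_{<0}) \sqcup (-\Delta^{+}(\lambda)_{=0})$. For $w \in W$, a total order $\prec$ on $w\Delta^{+}$ is a reflection order if for all $\alpha,\beta \in w\Delta^{+}$ with $\alpha+\beta \in w\Delta^{+}$, either $\alpha \prec \alpha+\beta \prec \beta$ or $\beta \prec \alpha+\beta \prec \alpha$.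 Let $\mathrm{RO}(\lambda, \Delta^{+})$ be the set of reflection orders $\lhd$ on $\Delta^{+}$ such that $\alpha \lhd \beta \lhd \gamma$ for all $\alpha \in \Delta^{+}(\lambda)_{<0}$, $\beta \in \Delta^{+}(\lambda)_{=0}$, $\gamma \in \Delta^{+}(\lambda)_{>0}$. Let $\mathrm{RO}(\lambda, w(\lambda)\Delta^{+})$ be the set of reflection orders $\prec$ on $w(\lambda)\Delta^{+}$ such that $\gamma \prec -\alpha \prec -\beta$ for all $\gamma \in \Delta^{+}(\lambda)_{>0}$, $\alpha \in \Delta^{+}(\lambda)_{<0}$, $\beta \in \Delta^{+}(\lambda)_{=0}$. For $\lhd \in \mathrm{RO}(\lambda,\Delta^{+})$, the total order $\prec_{\lhd}$ on $w(\lambda)\Delta^{+}$ is defined as follows: every element of $\Delta^{+}(\lambda)_{>0}$ precedes every element of $-\Delta^{+}(\lambda)_{<0}$, which precedes every element of $-\Delta^{+}(\lambda)_{=0}$; on $\Delta^{+}(\lambda)_{>0}$, $\gamma \prec_{\lhd} \gamma'$ iff $\gamma \lhd \gamma'$; on $-\Delta^{+}(\lambda)_{<0}$ and on $-\Delta^{+}(\lambda)_{=0}$, $-\alpha \prec_{\lhd} -\alpha'$ iff $\alpha \lhd \alpha'$. *)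

theory Defs
  imports "HOL-Analysis.Analysis"
begin

(* Abstract (real) root system model of the root system of a simple Lie algebra. *)

definition cpair :: "'a::euclidean_space \<Rightarrow> 'a \<Rightarrow> real" where
  "cpair x \<alpha> = 2 * (x \<bullet> \<alpha>) / (\<alpha> \<bullet> \<alpha>)"

definition refl_map :: "'a::euclidean_space \<Rightarrow> 'a \<Rightarrow> 'a" where
  "refl_map \<alpha> x = x - cpair x \<alpha> *\<^sub>R \<alpha>"

definition root_system :: "'a::euclidean_space set \<Rightarrow> bool" where
  "root_system R \<longleftrightarrow> finite R \<and> 0 \<notin> R \<and> span R = UNIV \<and>
     (\<forall>\<alpha>\<in>R. \<forall>\<beta>\<in>R. refl_map \<alpha> \<beta> \<in> R \<and> cpair \<beta> \<alpha> \<in> \<int>) \<and>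
     (\<forall>\<alpha>\<in>R. \<forall>c. c *\<^sub>R \<alpha> \<in> R \<longrightarrow> c = 1 \<or> c = -1)"

definition irreducible_rs :: "'a::euclidean_space set \<Rightarrow> bool" where
  "irreducible_rs R \<longleftrightarrow> (\<forall>A B. A \<union> B = R \<and> A \<inter> B = {} \<and> (\<forall>\<alpha>\<in>A. \<forall>\<beta>\<in>B. \<alpha> \<bullet> \<beta> = 0)
       \<longrightarrow> A = {} \<or> B = {})"

definition regular_vec :: "'a::euclidean_space set \<Rightarrow> 'a \<Rightarrow> bool" where
  "regular_vec R \<rho> \<longleftrightarrow> (\<forall>\<alpha>\<in>R. \<alpha> \<bullet> \<rho> \<noteq> 0)"

definition pos_roots :: "'a::euclidean_space set \<Rightarrow> 'a \<Rightarrow> 'a set" where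
  "pos_roots R \<rho> = {\<alpha>\<in>R. 0 < \<alpha> \<bullet> \<rho>}"

inductive_set weyl_group :: "'a::euclidean_space set \<Rightarrow> ('a \<Rightarrow> 'a) set" for R where
  weyl_id: "id \<in> weyl_group R"
| weyl_step: "w \<in> weyl_group R \<Longrightarrow> \<alpha> \<in> R \<Longrightarrow> refl_map \<alpha> \<circ> w \<in> weyl_group R"

definition weights :: "'a::euclidean_space set \<Rightarrow> 'a set" where
  "weights R = {x. \<forall>\<alpha>\<in>R. cpair x \<alpha> \<in> \<int>}"

definition dominant :: "'a::euclidean_space set \<Rightarrow> 'a \<Rightarrow> 'a \<Rightarrow> bool" where
  "dominant R \<rho> x \<longleftrightarrow> (\<forall>\<alpha>\<in>pos_roots R \<rho>. cpair x \<alpha> \<ge> 0)"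

definition dom_weight :: "'a::euclidean_space set \<Rightarrow> 'a \<Rightarrow> 'a \<Rightarrow> 'a" where
  "dom_weight R \<rho> x = (THE \<mu>. \<mu> \<in> (\<lambda>w. w x) ` weyl_group R \<and> dominant R \<rho> \<mu>)"

definition wlen :: "'a::euclidean_space set \<Rightarrow> 'a \<Rightarrow> ('a \<Rightarrow> 'a) \<Rightarrow> nat" where
  "wlen R \<rho> w = card {\<alpha>\<in>pos_roots R \<rho>. w \<alpha> \<notin> pos_roots R \<rho>}"

definition bruhat_step :: "'a::euclidean_space set \<Rightarrow> 'a \<Rightarrow> ('a \<Rightarrow> 'a) \<Rightarrow> ('a \<Rightarrow> 'a) \<Rightarrow> bool" where
  "bruhat_step R \<rho> u v \<longleftrightarrow> u \<in> weyl_group R \<and> (\<exists>\<alpha>\<in>R. v = u \<circ> refl_map \<alpha>) \<and> wlen R \<rho> u < wlen R \<rho> v"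

definition bruhat_le :: "'a::euclidean_space set \<Rightarrow> 'a \<Rightarrow> ('a \<Rightarrow> 'a) \<Rightarrow> ('a \<Rightarrow> 'a) \<Rightarrow> bool" where
  "bruhat_le R \<rho> = (bruhat_step R \<rho>)\<^sup>*\<^sup>*"

definition w_of :: "'a::euclidean_space set \<Rightarrow> 'a \<Rightarrow> 'a \<Rightarrow> ('a \<Rightarrow> 'a)" where
  "w_of R \<rho> x = (THE w. w \<in> weyl_group R \<and> w (dom_weight R \<rho> x) = x \<and>
      (\<forall>v\<in>weyl_group R. v (dom_weight R \<rho> x) = x \<longrightarrow> bruhat_le R \<rho> v w))"

definition pos_gt :: "'a::euclidean_space set \<Rightarrow> 'a \<Rightarrow> 'a \<Rightarrow> 'a set" where
  "pos_gt R \<rho> x = {\<alpha>\<in>pos_roots R \<rho>. cpair x \<alpha> > 0}"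
definition pos_eq :: "'a::euclidean_space set \<Rightarrow> 'a \<Rightarrow> 'a \<Rightarrow> 'a set" where
  "pos_eq R \<rho> x = {\<alpha>\<in>pos_roots R \<rho>. cpair x \<alpha> = 0}"
definition pos_lt :: "'a::euclidean_space set \<Rightarrow> 'a \<Rightarrow> 'a \<Rightarrow> 'a set" where
  "pos_lt R \<rho> x = {\<alpha>\<in>pos_roots R \<rho>. cpair x \<alpha> < 0}"

definition strict_total_order_on :: "'a set \<Rightarrow> 'a rel \<Rightarrow> bool" where
  "strict_total_order_on S r \<longleftrightarrow> r \<subseteq> S \<times> S \<and> irrefl r \<and> trans r \<and> total_on S r"

definition reflection_order :: "'a::euclidean_space set \<Rightarrow> 'a rel \<Rightarrow> bool" where
  "reflection_order S r \<longleftrightarrow> strict_total_order_on S r \<and>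
     (\<forall>\<alpha>\<in>S. \<forall>\<beta>\<in>S. \<alpha> + \<beta> \<in> S \<longrightarrow>
        ((\<alpha>, \<alpha> + \<beta>) \<in> r \<and> (\<alpha> + \<beta>, \<beta>) \<in> r) \<or> ((\<beta>, \<alpha> + \<beta>) \<in> r \<and> (\<alpha> + \<beta>, \<alpha>) \<in> r))"

definition RO_pos :: "'a::euclidean_space set \<Rightarrow> 'a \<Rightarrow> 'a \<Rightarrow> 'a rel set" where
  "RO_pos R \<rho> x = {r. reflection_order (pos_roots R \<rho>) r \<and>
     (\<forall>\<alpha>\<in>pos_lt R \<rho> x. \<forall>\<beta>\<in>pos_eq R \<rho> x. (\<alpha>, \<beta>) \<in> r) \<and>
     (\<forall>\<beta>\<in>pos_eq R \<rho> x. \<forall>\<gamma>\<in>pos_gt R \<rho> x. (\<beta>, \<gamma>) \<in> r) \<and>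
     (\<forall>\<alpha>\<in>pos_lt R \<rho> x. \<forall>\<gamma>\<in>pos_gt R \<rho> x. (\<alpha>, \<gamma>) \<in> r)}"

definition RO_w :: "'a::euclidean_space set \<Rightarrow> 'a \<Rightarrow> 'a \<Rightarrow> 'a rel set" where
  "RO_w R \<rho> x = {r. reflection_order (w_of R \<rho> x ` pos_roots R \<rho>) r \<and>
     (\<forall>\<gamma>\<in>pos_gt R \<rho> x. \<forall>\<alpha>\<in>pos_lt R \<rho> x. (\<gamma>, -\<alpha>) \<in> r) \<and>
     (\<forall>\<alpha>\<in>pos_lt R \<rho> x. \<forall>\<beta>\<in>pos_eq R \<rho> x. (-\<alpha>, -\<beta>) \<in> r) \<and>
     (\<forall>\<gamma>\<in>pos_gt R \<rho> x. \<forall>\<beta>\<in>pos_eq R \<rho> x. (\<gamma>, -\<beta>) \<in> r)}"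

definition induced_order :: "'a::euclidean_space set \<Rightarrow> 'a \<Rightarrow> 'a \<Rightarrow> 'a rel \<Rightarrow> 'a rel" where
  "induced_order R \<rho> x r =
     {(a, b). a \<in> pos_gt R \<rho> x \<and> b \<in> uminus ` pos_lt R \<rho> x}
   \<union> {(a, b). a \<in> uminus ` pos_lt R \<rho> x \<and> b \<in> uminus ` pos_eq R \<rho> x}
   \<union> {(a, b). a \<in> pos_gt R \<rho> x \<and> b \<in> uminus ` pos_eq R \<rho> x}
   \<union> {(a, b). a \<in> pos_gt R \<rho> x \<and> b \<in> pos_gt R \<rho> x \<and> (a, b) \<in> r}
   \<union> {(a, b). a \<in> uminus ` pos_lt R \<rho> x \<and> b \<in> uminus ` pos_lt R \<rho> x \<and> (-a, -b) \<in> r}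
   \<union> {(a, b). a \<in> uminus ` pos_eq R \<rho> x \<and> b \<in> uminus ` pos_eq R \<rho> x \<and> (-a, -b) \<in> r}"

end

theory Submission
  imports Defs
begin


lemma cpair_refl_self: "a \<noteq> 0 \<Longrightarrow> cpair a a = 2"
  by (simp add: cpair_def)

lemma refl_map_self: "a \<noteq> 0 \<Longrightarrow> refl_map a a = - a"
  by (simp add: refl_map_def cpair_def scaleR_2)

lemma refl_map_add: "refl_map a (x + y) = refl_map a x + refl_map a y"
  by (simp add: refl_map_def cpair_def inner_add_left add_divide_distrib algebra_simps scaleR_add_left)

lemma refl_map_scale: "refl_map a (c *\<^sub>R x) = c *\<^sub>R refl_map a x"
  by (simp add: refl_map_def cpair_def algebra_simps)

lemma linear_refl_map: "linear (refl_map a)"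
  by (intro linearI refl_map_add refl_map_scale)

lemma refl_map_inner: "a \<noteq> 0 \<Longrightarrow> refl_map a x \<bullet> refl_map a y = x \<bullet> y"
  by (simp add: refl_map_def cpair_def inner_diff_left inner_diff_right algebra_simps power2_eq_square)
     (simp add: field_simps inner_commute)

lemma refl_map_invol: "a \<noteq> 0 \<Longrightarrow> refl_map a (refl_map a x) = x"
  by (simp add: refl_map_def cpair_def inner_diff_left algebra_simps)

lemma refl_map_neg: "refl_map (- a) = refl_map a"
  by (rule ext) (simp add: refl_map_def cpair_def)

definition orth :: "('a::euclidean_space \<Rightarrow> 'a) \<Rightarrow> bool" where
  "orth w \<longleftrightarrow> linear w \<and> (\<forall>x y. w x \<bullet> w y = x \<bullet> y)"

lemma orth_refl: "a \<noteq> 0 \<Longrightarrow> orth (refl_map a)"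
  by (simp add: orth_def linear_refl_map refl_map_inner)

lemma orth_comp: "orth f \<Longrightarrow> orth g \<Longrightarrow> orth (f \<circ> g)"
  by (simp add: orth_def linear_compose)

lemma orth_id: "orth id"
  by (simp add: orth_def linear_id)

lemma orth_inj: assumes "orth w" shows "inj w"
proof (rule injI)
  fix x y assume "w x = w y"
  then have "w (x - y) = 0" using assms by (simp add: orth_def linear_diff)
  then have "(x - y) \<bullet> (x - y) = 0" using assms unfolding orth_def by (metis inner_zero_left)
  then show "x = y" by simp
qed

lemma orth_cpair: "orth w \<Longrightarrow> cpair (w x) (w a) = cpair x a"
  by (simp add: orth_def cpair_def)

lemma orth_refl_conj: assumes "orth w" shows "refl_map (w a) (w x) = w (refl_map a x)"
  using assms by (simp add: refl_map_def orth_cpair orth_def linear_diff linear_scale)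



locale rs =
  fixes R :: "'a::euclidean_space set" and \<rho> :: 'a
  assumes rs: "root_system R" and reg: "regular_vec R \<rho>"
begin

abbreviation "P \<equiv> pos_roots R \<rho>"

definition "Simp = {a\<in>P. \<not>(\<exists>b c. b \<in> P \<and> c \<in> P \<and> a = b + c)}"

definition F :: "'a list \<Rightarrow> 'a \<Rightarrow> 'a" where
  "F l = foldr (\<lambda>a f. refl_map a \<circ> f) l id"

lemma finR: "finite R" using rs by (simp add: root_system_def)
lemma zR: "0 \<notin> R" using rs by (simp add: root_system_def)
lemma nz: "a \<in> R \<Longrightarrow> a \<noteq> 0" using zR by auto
lemma reflR: "a \<in> R \<Longrightarrow> b \<in> R \<Longrightarrow> refl_map a b \<in> R"
  using rs by (simp add: root_system_def)
lemma cpairZ: "a \<in> R \<Longrightarrow> b \<in> R \<Longrightarrow> cpair b a \<in> \<int>"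
  using rs by (simp add: root_system_def)
lemma reduced: "a \<in> R \<Longrightarrow> c *\<^sub>R a \<in> R \<Longrightarrow> c = 1 \<or> c = -1"
  using rs by (simp add: root_system_def)
lemma negR: "a \<in> R \<Longrightarrow> - a \<in> R"
  using reflR[of a a] refl_map_self[OF nz] by simp
lemma regR: "a \<in> R \<Longrightarrow> a \<bullet> \<rho> \<noteq> 0"
  using reg by (simp add: regular_vec_def)
lemma P_iff: "a \<in> P \<longleftrightarrow> a \<in> R \<and> 0 < a \<bullet> \<rho>"
  by (simp add: pos_roots_def)
lemma notP: "a \<in> R \<Longrightarrow> a \<notin> P \<longleftrightarrow> a \<bullet> \<rho> < 0"
  using regR[of a] by (auto simp: P_iff)
lemma finP: "finite P" using finR by (simp add: pos_roots_def)
lemma PR: "a \<in> P \<Longrightarrow> a \<in> R" by (simp add: P_iff)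
lemma SimpP: "a \<in> Simp \<Longrightarrow> a \<in> P" by (simp add: Simp_def)
lemma finSimp: "finite Simp" using finP by (rule finite_subset[rotated]) (auto simp: Simp_def)
lemma inner_pos: "a \<in> R \<Longrightarrow> 0 < a \<bullet> a" using nz by simp

lemma cpair_sign: "a \<in> R \<Longrightarrow> (0 < cpair x a \<longleftrightarrow> 0 < x \<bullet> a) \<and> (cpair x a < 0 \<longleftrightarrow> x \<bullet> a < 0)
   \<and> (cpair x a = 0 \<longleftrightarrow> x \<bullet> a = 0)"
proof -
  assume "a \<in> R" then have "0 < a \<bullet> a" by (rule inner_pos)
  then show ?thesis unfolding cpair_def
    by (smt (verit, best) divide_less_0_iff divide_pos_pos zero_less_divide_iff)
qed

lemma weyl_orth: "w \<in> weyl_group R \<Longrightarrow> orth w"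
proof (induction rule: weyl_group.induct)
  case weyl_id then show ?case by (rule orth_id)
next
  case (weyl_step w a) then show ?case by (intro orth_comp orth_refl nz)
qed

lemma weyl_R: "w \<in> weyl_group R \<Longrightarrow> a \<in> R \<Longrightarrow> w a \<in> R"
  by (induction rule: weyl_group.induct) (auto intro: reflR)

lemma weyl_refl: "w \<in> weyl_group R \<Longrightarrow> a \<in> R \<Longrightarrow> w \<circ> refl_map a \<in> weyl_group R"
proof (induction rule: weyl_group.induct)
  case weyl_id
  then show ?case using weyl_group.weyl_step[OF weyl_group.weyl_id, of a R] by simp
next
  case (weyl_step w b)
  then have "w \<circ> refl_map a \<in> weyl_group R" by blast
  then have "refl_map b \<circ> (w \<circ> refl_map a) \<in> weyl_group R" using weyl_step.hyps by (intro weyl_group.weyl_step)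
  then show ?case by (simp only: comp_assoc)
qed

lemma lin: "orth w \<Longrightarrow> linear w" by (simp add: orth_def)
lemma inner_w: "orth w \<Longrightarrow> w x \<bullet> w y = x \<bullet> y" by (simp add: orth_def)

lemma weyl_neg: "w \<in> weyl_group R \<Longrightarrow> w (- x) = - w x"
  using weyl_orth linear_neg lin by blast

lemma F_Nil[simp]: "F [] = id" by (simp add: F_def)
lemma F_Cons[simp]: "F (a # l) = refl_map a \<circ> F l" by (simp add: F_def)
lemma F_append: "F (l1 @ l2) = F l1 \<circ> F l2"
  by (induction l1) (auto simp: comp_assoc)

lemma F_weyl: "set l \<subseteq> R \<Longrightarrow> F l \<in> weyl_group R"
  by (induction l) (auto intro: weyl_group.intros)

lemma F_rev: "set l \<subseteq> R \<Longrightarrow> F (rev l) \<circ> F l = id \<and> F l \<circ> F (rev l) = id"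
proof (induction l)
  case Nil then show ?case by simp
next
  case (Cons a l)
  have inv: "refl_map a \<circ> refl_map a = id" using Cons.prems by (auto simp: refl_map_invol nz)
  have IH1: "F (rev l) (F l x) = x" and IH2: "F l (F (rev l) x) = x" for x
    using Cons by (auto simp: fun_eq_iff)
  have inv1: "refl_map a (refl_map a x) = x" for x using Cons.prems by (auto simp: refl_map_invol nz)
  show ?case by (auto simp: fun_eq_iff F_append IH1 IH2 inv1)
qed

lemma F_rev_app: "set l \<subseteq> R \<Longrightarrow> F (rev l) (F l x) = x" "set l \<subseteq> R \<Longrightarrow> F l (F (rev l) x) = x"
  using F_rev[of l] by (auto simp: fun_eq_iff)

end

context rs begin

lemma diff_root:
  assumes a: "a \<in> R" and b: "b \<in> R" and ab: "0 < a \<bullet> b" and ne: "a \<noteq> b"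
  shows "a - b \<in> R"
proof -
  obtain m where m: "cpair a b = of_int m" using cpairZ[OF b a] Ints_cases by metis
  obtain n where n: "cpair b a = of_int n" using cpairZ[OF a b] Ints_cases by metis
  have aa: "0 < a \<bullet> a" and bb: "0 < b \<bullet> b" using inner_pos a b by auto
  have "0 < cpair a b" using cpair_sign[OF b] ab by simp
  then have m1: "1 \<le> m" using m by simp
  have "0 < cpair b a" using cpair_sign[OF a] ab by (simp add: inner_commute)
  then have n1: "1 \<le> n" using n by simp
  have prod: "cpair a b * cpair b a = 4 * (a \<bullet> b)^2 / ((a \<bullet> a) * (b \<bullet> b))"
    using aa bb by (simp add: cpair_def inner_commute power2_eq_square field_simps)
  have "(a \<bullet> b)^2 \<le> (a \<bullet> a) * (b \<bullet> b)" by (rule Cauchy_Schwarz_ineq)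
  then have "4 * (a \<bullet> b)^2 / ((a \<bullet> a) * (b \<bullet> b)) \<le> 4"
    using aa bb by (simp add: divide_le_eq)
  then have "real_of_int (m * n) \<le> 4" using prod m n by simp
  then have mn: "m * n \<le> 4" by linarith
  have cases: "m = 1 \<or> n = 1 \<or> (m = 2 \<and> n = 2)"
  proof (rule ccontr)
    assume "\<not> ?thesis"
    then have "m \<ge> 2" "n \<ge> 2" "m \<ge> 3 \<or> n \<ge> 3" using m1 n1 by auto
    then have "m * n \<ge> 3 * 2 \<or> m * n \<ge> 2 * 3" by (metis mult_mono zero_le_numeral order.trans)
    then have "m * n \<ge> 6" by auto
    then show False using mn by simp
  qed
  show ?thesis
  proof -
    { assume "m = 1"
      then have "refl_map b a = a - b" using m by (simp add: refl_map_def)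
      then have ?thesis using reflR[OF b a] by simp }
    moreover
    { assume "n = 1"
      then have "refl_map a b = b - a" using n by (simp add: refl_map_def)
      then have "b - a \<in> R" using reflR[OF a b] by simp
      then have ?thesis using negR by fastforce }
    moreover
    { assume "m = 2 \<and> n = 2"
      then have "a \<bullet> b = b \<bullet> b" "a \<bullet> b = a \<bullet> a" using m n bb aa
        by (auto simp: cpair_def inner_commute field_simps)
      then have "(a - b) \<bullet> (a - b) = 0" by (simp add: inner_diff_left inner_diff_right inner_commute)
      then have False using ne by simp }
    ultimately show ?thesis using cases by blast
  qed
qed

lemma simple_obtuse:
  assumes "d1 \<in> Simp" "d2 \<in> Simp" "d1 \<noteq> d2" shows "d1 \<bullet> d2 \<le> 0"
proof (rule ccontr)
  assume "\<not> ?thesis"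
  then have "d1 - d2 \<in> R" using assms diff_root SimpP PR by auto
  show False
  proof (cases "d1 - d2 \<in> P")
    case True
    then have "d1 = d2 + (d1 - d2)" by simp
    then show False using assms True unfolding Simp_def by blast
  next
    case False
    have lt0: "(d1 - d2) \<bullet> \<rho> < 0" using False notP \<open>d1 - d2 \<in> R\<close> by simp
    have "d2 - d1 = - (d1 - d2)" by simp
    then have "d2 - d1 \<in> R" using negR[OF \<open>d1 - d2 \<in> R\<close>] by simp
    then have "d2 - d1 \<in> P" using lt0 by (simp add: P_iff inner_diff_left)
    then have "d2 = d1 + (d2 - d1)" by simp
    then show False using assms \<open>d2 - d1 \<in> P\<close> unfolding Simp_def by blast
  qed
qed

lemma pos_comb:
  assumes "b \<in> P"
  shows "\<exists>k. (\<forall>d\<in>Simp. 0 \<le> k d) \<and> b = (\<Sum>d\<in>Simp. k d *\<^sub>R d)"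
proof -
  have "\<And>b. card {c\<in>P. c \<bullet> \<rho> < b \<bullet> \<rho>} = n \<Longrightarrow> b \<in> P \<Longrightarrow>
     \<exists>k. (\<forall>d\<in>Simp. 0 \<le> k d) \<and> b = (\<Sum>d\<in>Simp. k d *\<^sub>R d)" for n
  proof (induction n rule: less_induct)
    case (less n b)
    show ?case
    proof (cases "b \<in> Simp")
      case True
      show ?thesis
        by (rule exI[of _ "\<lambda>d. if d = b then 1 else 0"])
           (simp add: if_distrib[of "\<lambda>x. x *\<^sub>R _"] sum.delta[OF finSimp] True cong: if_cong)
    next
      case False
      then obtain b1 b2 where bb: "b1 \<in> P" "b2 \<in> P" "b = b1 + b2"
        using less.prems unfolding Simp_def by blast
      have lt: "card {c\<in>P. c \<bullet> \<rho> < bi \<bullet> \<rho>} < n" if "bi \<in> P" "bi \<bullet> \<rho> < b \<bullet> \<rho>" for bi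
      proof -
        have "{c\<in>P. c \<bullet> \<rho> < bi \<bullet> \<rho>} \<subset> {c\<in>P. c \<bullet> \<rho> < b \<bullet> \<rho>}"
          using that by auto
        then show ?thesis using less.prems finP by (metis (no_types, lifting) psubset_card_mono finite_subset mem_Collect_eq subsetI)
      qed
      have l1: "b1 \<bullet> \<rho> < b \<bullet> \<rho>" and l2: "b2 \<bullet> \<rho> < b \<bullet> \<rho>"
        using bb(1,2) unfolding bb(3) by (auto simp: P_iff inner_add_left)
      obtain k1 where k1: "(\<forall>d\<in>Simp. 0 \<le> k1 d) \<and> b1 = (\<Sum>d\<in>Simp. k1 d *\<^sub>R d)"
        using less.IH[OF lt[OF bb(1) l1] refl bb(1)] by blast
      obtain k2 where k2: "(\<forall>d\<in>Simp. 0 \<le> k2 d) \<and> b2 = (\<Sum>d\<in>Simp. k2 d *\<^sub>R d)"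
        using less.IH[OF lt[OF bb(2) l2] refl bb(2)] by blast
      show ?thesis
        by (rule exI[of _ "\<lambda>d. k1 d + k2 d"]) (use k1 k2 bb in \<open>auto simp: scaleR_add_left sum.distrib\<close>)
    qed
  qed
  then show ?thesis using assms by blast
qed

lemma simple_refl_pos:
  assumes a: "a \<in> Simp" and b: "b \<in> P" and ne: "b \<noteq> a"
  shows "refl_map a b \<in> P"
proof (rule ccontr)
  assume nP: "refl_map a b \<notin> P"
  have aP: "a \<in> P" and aR: "a \<in> R" using a SimpP PR by auto
  have sR: "refl_map a b \<in> R" using reflR aR b PR by auto
  then have "- refl_map a b \<in> P" using nP negR notP by (auto simp: P_iff)
  obtain k where k: "\<forall>d\<in>Simp. 0 \<le> k d" "b = (\<Sum>d\<in>Simp. k d *\<^sub>R d)" using pos_comb[OF b] by blast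
  obtain m where m: "\<forall>d\<in>Simp. 0 \<le> m d" "- refl_map a b = (\<Sum>d\<in>Simp. m d *\<^sub>R d)"
    using pos_comb[OF \<open>- refl_map a b \<in> P\<close>] by blast
  define c where "c = cpair b a"
  have "b - refl_map a b = c *\<^sub>R a" by (simp add: refl_map_def c_def)
  then have bs: "b + (- refl_map a b) = c *\<^sub>R a" by simp
  have "(\<Sum>d\<in>Simp. (k d + m d) *\<^sub>R d) = (\<Sum>d\<in>Simp. k d *\<^sub>R d) + (\<Sum>d\<in>Simp. m d *\<^sub>R d)"
    by (simp add: scaleR_add_left sum.distrib)
  also have "\<dots> = b + (- refl_map a b)" by (simp only: k(2)[symmetric] m(2)[symmetric])
  finally have "(\<Sum>d\<in>Simp. (k d + m d) *\<^sub>R d) = c *\<^sub>R a" using bs by simp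
  moreover have "(\<Sum>d\<in>Simp. (k d + m d) *\<^sub>R d) = (k a + m a) *\<^sub>R a + (\<Sum>d\<in>Simp-{a}. (k d + m d) *\<^sub>R d)"
    using a finSimp by (simp add: sum.remove)
  ultimately have X: "(\<Sum>d\<in>Simp-{a}. (k d + m d) *\<^sub>R d) = (c - (k a + m a)) *\<^sub>R a"
    by (simp add: algebra_simps)
  define X where "X = (\<Sum>d\<in>Simp-{a}. (k d + m d) *\<^sub>R d)"
  have "\<exists>d0\<in>Simp-{a}. 0 < k d0"
  proof (rule ccontr)
    assume "\<not> ?thesis"
    then have z: "\<forall>d\<in>Simp-{a}. k d = 0" using k by force
    have "b = k a *\<^sub>R a + (\<Sum>d\<in>Simp-{a}. k d *\<^sub>R d)"
      using k a finSimp by (simp add: sum.remove)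
    also have "(\<Sum>d\<in>Simp-{a}. k d *\<^sub>R d) = 0" using z by simp
    finally have "b = k a *\<^sub>R a" by simp
    then have "k a = 1 \<or> k a = -1" using reduced aR b PR by auto
    then have "k a = 1" using k a by force
    then show False using ne \<open>b = k a *\<^sub>R a\<close> by simp
  qed
  then obtain d0 where d0: "d0 \<in> Simp-{a}" "0 < k d0" by blast
  have "0 < X \<bullet> \<rho>"
  proof -
    have pos: "0 < (k d0 + m d0) * (d0 \<bullet> \<rho>)" using d0 k m SimpP[of d0]
      by (intro mult_pos_pos add_pos_nonneg) (auto simp: P_iff)
    have nonneg: "0 \<le> (k d + m d) * (d \<bullet> \<rho>)" if "d \<in> Simp-{a}" for d
    proof -
      have "0 \<le> k d + m d" using k m that by auto
      moreover have "0 \<le> d \<bullet> \<rho>" using SimpP[of d] that by (auto simp: P_iff)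
      ultimately show ?thesis by simp
    qed
    have "X \<bullet> \<rho> = (\<Sum>d\<in>Simp-{a}. (k d + m d) * (d \<bullet> \<rho>))"
      by (simp add: X_def inner_sum_left)
    also have "0 < (\<Sum>d\<in>Simp-{a}. (k d + m d) * (d \<bullet> \<rho>))"
      using finSimp by (intro sum_pos2[where f="\<lambda>d. (k d + m d) * (d \<bullet> \<rho>)", OF _ d0(1) pos nonneg]) auto
    finally show ?thesis .
  qed
  then have t: "0 < c - (k a + m a)" using X aP X_def by (auto simp: P_iff zero_less_mult_iff)
  have "X \<bullet> a \<le> 0"
  proof -
    have "X \<bullet> a = (\<Sum>d\<in>Simp-{a}. (k d + m d) * (d \<bullet> a))"
      by (simp add: X_def inner_sum_left)
    also have "\<dots> \<le> 0" using k m simple_obtuse a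
      by (intro sum_nonpos) (auto intro!: mult_nonneg_nonpos)
    finally show ?thesis .
  qed
  moreover have "X \<bullet> a = (c - (k a + m a)) * (a \<bullet> a)" using X X_def by simp
  moreover have "0 < a \<bullet> a" using inner_pos aR by simp
  ultimately show False using t by (simp add: mult_le_0_iff)
qed

lemma exists_simple_pos:
  assumes "b \<in> P" shows "\<exists>d\<in>Simp. 0 < b \<bullet> d"
proof (rule ccontr)
  assume "\<not> ?thesis"
  then have nn: "\<forall>d\<in>Simp. b \<bullet> d \<le> 0" by auto
  obtain k where k: "\<forall>d\<in>Simp. 0 \<le> k d" "b = (\<Sum>d\<in>Simp. k d *\<^sub>R d)" using pos_comb[OF assms] by blast
  have "b \<bullet> b = (\<Sum>d\<in>Simp. k d * (b \<bullet> d))"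
    by (subst (2) k(2)) (simp add: inner_sum_right)
  also have "\<dots> \<le> 0" using k nn by (intro sum_nonpos) (auto intro!: mult_nonneg_nonpos)
  finally show False using inner_pos assms PR by fastforce
qed

end

context rs begin

lemma SimpR: "set l \<subseteq> Simp \<Longrightarrow> set l \<subseteq> R" using SimpP PR by blast

lemma F_orth: "set l \<subseteq> R \<Longrightarrow> orth (F l)" using F_weyl weyl_orth by blast

lemma F_R: "set l \<subseteq> R \<Longrightarrow> a \<in> R \<Longrightarrow> F l a \<in> R" using F_weyl weyl_R by blast

lemma refl_F: assumes "set l \<subseteq> R" shows "refl_map (F l a) = F l \<circ> refl_map a \<circ> F (rev l)"
proof (rule ext)
  fix y
  have "refl_map (F l a) y = refl_map (F l a) (F l (F (rev l) y))" using F_rev_app(2)[OF assms] by simp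
  also have "\<dots> = F l (refl_map a (F (rev l) y))" using orth_refl_conj[OF F_orth[OF assms]] by simp
  finally show "refl_map (F l a) y = (F l \<circ> refl_map a \<circ> F (rev l)) y" by simp
qed

lemma pos_conj_simple:
  assumes "b \<in> P" shows "\<exists>l a. set l \<subseteq> Simp \<and> a \<in> Simp \<and> b = F l a"
proof -
  have "\<And>b. card {c\<in>P. c \<bullet> \<rho> < b \<bullet> \<rho>} = n \<Longrightarrow> b \<in> P \<Longrightarrow> \<exists>l a. set l \<subseteq> Simp \<and> a \<in> Simp \<and> b = F l a" for n
  proof (induction n rule: less_induct)
    case (less n b)
    show ?case
    proof (cases "b \<in> Simp")
      case True
      then show ?thesis by (intro exI[of _ "[]"] exI[of _ b]) simp
    next
      case False
      obtain d where d: "d \<in> Simp" "0 < b \<bullet> d" using exists_simple_pos[OF less.prems(2)] by blast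
      have ne: "b \<noteq> d" using False d by auto
      define g where "g = refl_map d b"
      have gP: "g \<in> P" using simple_refl_pos[OF d(1) less.prems(2) ne] g_def by simp
      have dR: "d \<in> R" using d SimpP PR by auto
      have "0 < cpair b d" using cpair_sign[OF dR] d by simp
      moreover have "0 < d \<bullet> \<rho>" using d SimpP by (auto simp: P_iff)
      ultimately have lt: "g \<bullet> \<rho> < b \<bullet> \<rho>" by (simp add: g_def refl_map_def inner_diff_left)
      have "{c\<in>P. c \<bullet> \<rho> < g \<bullet> \<rho>} \<subset> {c\<in>P. c \<bullet> \<rho> < b \<bullet> \<rho>}" using lt gP by auto
      then have "card {c\<in>P. c \<bullet> \<rho> < g \<bullet> \<rho>} < n" using less.prems finP
        by (metis (no_types, lifting) psubset_card_mono finite_subset mem_Collect_eq subsetI)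
      then obtain l a where la: "set l \<subseteq> Simp" "a \<in> Simp" "g = F l a"
        using less.IH[OF _ refl gP] by blast
      have "b = refl_map d g" using g_def refl_map_invol[OF nz[OF dR]] by simp
      then have "b = F (d # l) a" using la by simp
      then show ?thesis using la d by (intro exI[of _ "d # l"] exI[of _ a]) simp
    qed
  qed
  then show ?thesis using assms by blast
qed

lemma refl_in_F: assumes "b \<in> R" shows "\<exists>l. set l \<subseteq> Simp \<and> refl_map b = F l"
proof -
  have "\<exists>l. set l \<subseteq> Simp \<and> refl_map c = F l" if cP: "c \<in> P" for c
  proof -
    obtain m a where ma: "set m \<subseteq> Simp" "a \<in> Simp" "c = F m a" using pos_conj_simple[OF cP] by blast
    have "refl_map c = F (m @ [a] @ rev m)"
      using refl_F[OF SimpR[OF ma(1)]] ma by (simp add: F_append comp_assoc)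
    then show ?thesis using ma by (intro exI[of _ "m @ [a] @ rev m"]) auto
  qed
  moreover have "b \<in> P \<or> - b \<in> P" using assms negR notP by (force simp: P_iff)
  ultimately show ?thesis using refl_map_neg by metis
qed

lemma weyl_F: "w \<in> weyl_group R \<Longrightarrow> \<exists>l. set l \<subseteq> Simp \<and> w = F l"
proof (induction rule: weyl_group.induct)
  case weyl_id then show ?case by (intro exI[of _ "[]"]) simp
next
  case (weyl_step w b)
  obtain l where l: "set l \<subseteq> Simp" "w = F l" using weyl_step by blast
  obtain m where m: "set m \<subseteq> Simp" "refl_map b = F m" using refl_in_F weyl_step by blast
  show ?case using l m by (intro exI[of _ "m @ l"]) (auto simp: F_append)
qed

lemma exchange:
  assumes "set l \<subseteq> Simp" "a \<in> Simp" "F l a \<notin> P"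
  shows "\<exists>l'. set l' \<subseteq> Simp \<and> length l' < length l \<and> F l \<circ> refl_map a = F l'"
  using assms
proof (induction l)
  case Nil then show ?case using SimpP by simp
next
  case (Cons b l0)
  have aR: "a \<in> R" using Cons SimpP PR by auto
  show ?case
  proof (cases "F l0 a \<in> P")
    case False
    have l0S: "set l0 \<subseteq> Simp" using Cons.prems by simp
    obtain l' where l': "set l' \<subseteq> Simp" "length l' < length l0" "F l0 \<circ> refl_map a = F l'"
      using Cons.IH[OF l0S Cons.prems(2) False] by blast
    have "F (b # l0) \<circ> refl_map a = F (b # l')" by (metis F_Cons comp_assoc l'(3))
    moreover have "set (b # l') \<subseteq> Simp" "length (b # l') < length (b # l0)" using Cons.prems l' by auto
    ultimately show ?thesis by blast
  next
    case True
    have "refl_map b (F l0 a) \<notin> P" using Cons.prems by simp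
    then have eq: "F l0 a = b" using simple_refl_pos[of b "F l0 a"] True Cons.prems by auto
    have "F (b # l0) \<circ> refl_map a = F l0"
    proof (rule ext)
      fix x
      have "(F (b # l0) \<circ> refl_map a) x = refl_map (F l0 a) (F l0 (refl_map a x))" using eq by simp
      also have "\<dots> = F l0 (refl_map a (refl_map a x))"
        using orth_refl_conj[OF F_orth[OF SimpR]] Cons.prems by simp
      also have "\<dots> = F l0 x" using refl_map_invol[OF nz[OF aR]] by simp
      finally show "(F (b # l0) \<circ> refl_map a) x = F l0 x" .
    qed
    moreover have "set l0 \<subseteq> Simp" "length l0 < length (b # l0)" using Cons.prems by auto
    ultimately show ?thesis by blast
  qed
qed

lemma F_pos_id:
  assumes "set l \<subseteq> Simp" "\<forall>b\<in>P. F l b \<in> P" shows "F l = id"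
proof -
  have "\<And>l. length l = n \<Longrightarrow> set l \<subseteq> Simp \<Longrightarrow> \<forall>b\<in>P. F l b \<in> P \<Longrightarrow> F l = id" for n
  proof (induction n rule: less_induct)
    case (less n l)
    show ?case
    proof (cases l rule: rev_exhaust)
      case Nil then show ?thesis by simp
    next
      case (snoc l0 a)
      have a: "a \<in> Simp" and l0: "set l0 \<subseteq> Simp" using less.prems snoc by auto
      have aR: "a \<in> R" using a SimpP PR by auto
      have Fl: "F l = F l0 \<circ> refl_map a" using snoc by (simp add: F_append)
      have "F l a \<in> P" using less.prems a SimpP by auto
      then have "- F l0 a \<in> P" using Fl refl_map_self[OF nz[OF aR]] weyl_neg[OF F_weyl[OF SimpR[OF l0]]] by simp
      then have "F l0 a \<notin> P" by (auto simp: P_iff)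
      then obtain l' where l': "set l' \<subseteq> Simp" "length l' < length l0" "F l0 \<circ> refl_map a = F l'"
        using exchange[OF l0 a] by blast
      have "F l' = id" using less.IH[of "length l'" l'] l' less.prems snoc Fl by auto
      then show ?thesis using Fl l' by simp
    qed
  qed
  then show ?thesis using assms by blast
qed

lemma weyl_unique:
  assumes "w1 \<in> weyl_group R" "w2 \<in> weyl_group R" "w2 ` P \<subseteq> w1 ` P"
  shows "w1 = w2"
proof -
  obtain l1 where l1: "set l1 \<subseteq> Simp" "w1 = F l1" using weyl_F assms by blast
  obtain l2 where l2: "set l2 \<subseteq> Simp" "w2 = F l2" using weyl_F assms by blast
  have "\<forall>b\<in>P. F (rev l1 @ l2) b \<in> P"
  proof
    fix b assume "b \<in> P"
    then obtain c where c: "c \<in> P" "w2 b = w1 c" using assms by blast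
    have "F (rev l1 @ l2) b = F (rev l1) (F l1 c)" using c l1 l2 by (simp add: F_append)
    also have "\<dots> = c" using F_rev_app(1)[OF SimpR[OF l1(1)]] by simp
    finally show "F (rev l1 @ l2) b \<in> P" using c by simp
  qed
  then have "F (rev l1 @ l2) = id" using F_pos_id l1 l2 by auto
  then have "F l1 \<circ> F (rev l1) \<circ> F l2 = F l1" by (simp add: F_append comp_assoc)
  then show ?thesis using F_rev[OF SimpR[OF l1(1)]] l1 l2 by simp
qed

lemma weyl_comp: "w \<in> weyl_group R \<Longrightarrow> v \<in> weyl_group R \<Longrightarrow> w \<circ> v \<in> weyl_group R"
  using weyl_F F_weyl SimpR F_append by (metis set_append Un_subset_iff)

lemma weyl_inv: "w \<in> weyl_group R \<Longrightarrow> \<exists>v\<in>weyl_group R. v \<circ> w = id \<and> w \<circ> v = id"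
  using weyl_F F_weyl SimpR F_rev by (metis set_rev)

end

context rs begin

definition "Nset v = {b\<in>P. v b \<notin> P}"
lemma wlen_N: "wlen R \<rho> v = card (Nset v)" by (simp add: wlen_def Nset_def)
lemma finN: "finite (Nset v)" using finP by (simp add: Nset_def)
lemma wlen_le: "wlen R \<rho> v \<le> card P" unfolding wlen_N Nset_def using finP by (intro card_mono) auto

lemma wlen_step:
  assumes a: "a \<in> Simp" and v: "v \<in> weyl_group R" and va: "v a \<in> P"
  shows "wlen R \<rho> (v \<circ> refl_map a) = Suc (wlen R \<rho> v)"
proof -
  have aR: "a \<in> R" using a SimpP PR by auto
  have inv: "refl_map a (refl_map a x) = x" for x using refl_map_invol[OF nz[OF aR]] .
  have sa: "refl_map a a = - a" using refl_map_self[OF nz[OF aR]] .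
  have eq: "Nset (v \<circ> refl_map a) = insert a (refl_map a ` Nset v)"
  proof (intro equalityI subsetI)
    fix b assume "b \<in> Nset (v \<circ> refl_map a)"
    then have b: "b \<in> P" "v (refl_map a b) \<notin> P" by (auto simp: Nset_def)
    show "b \<in> insert a (refl_map a ` Nset v)"
    proof (cases "b = a")
      case False
      then have "refl_map a b \<in> P" using simple_refl_pos a b by auto
      then have "refl_map a b \<in> Nset v" using b by (simp add: Nset_def)
      then show ?thesis using inv[of b] by (metis image_eqI insertI2)
    qed simp
  next
    fix b assume "b \<in> insert a (refl_map a ` Nset v)"
    then show "b \<in> Nset (v \<circ> refl_map a)"
    proof
      assume "b = a"
      then show ?thesis using va a SimpP weyl_neg[OF v] sa by (auto simp: Nset_def P_iff)
    next
      assume "b \<in> refl_map a ` Nset v"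
      then obtain c where c: "c \<in> P" "v c \<notin> P" "b = refl_map a c" by (auto simp: Nset_def)
      have "c \<noteq> a" using c va by auto
      then have "b \<in> P" using simple_refl_pos a c by auto
      then show ?thesis using c inv by (simp add: Nset_def)
    qed
  qed
  have "a \<notin> refl_map a ` Nset v"
  proof
    assume "a \<in> refl_map a ` Nset v"
    then obtain c where "c \<in> P" "a = refl_map a c" by (auto simp: Nset_def)
    then have "c = - a" using inv sa by metis
    then show False using \<open>c \<in> P\<close> SimpP[OF a] by (auto simp: P_iff)
  qed
  moreover have "inj_on (refl_map a) (Nset v)" using inv by (metis inj_onI)
  ultimately show ?thesis unfolding wlen_N eq using finN by (simp add: card_image)
qed

lemma support:
  assumes b: "b \<in> P" and mu: "\<forall>d\<in>Simp. 0 \<le> mu \<bullet> d" and mb: "mu \<bullet> b = 0"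
    and f: "linear (f :: 'a \<Rightarrow> real)" and fb: "0 < f b"
  shows "\<exists>d\<in>Simp. mu \<bullet> d = 0 \<and> 0 < f d"
proof -
  obtain k where k: "\<forall>d\<in>Simp. 0 \<le> k d" "b = (\<Sum>d\<in>Simp. k d *\<^sub>R d)" using pos_comb[OF b] by blast
  have "mu \<bullet> b = (\<Sum>d\<in>Simp. k d * (mu \<bullet> d))" by (subst k(2)) (simp add: inner_sum_right)
  then have s0: "(\<Sum>d\<in>Simp. k d * (mu \<bullet> d)) = 0" using mb by simp
  have nn: "\<And>d. d \<in> Simp \<Longrightarrow> 0 \<le> k d * (mu \<bullet> d)" using k mu by auto
  have z: "\<forall>d\<in>Simp. k d * (mu \<bullet> d) = 0"
    using sum_nonneg_eq_0_iff[OF finSimp, of "\<lambda>d. k d * (mu \<bullet> d)"] nn s0 by blast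
  have "f b = (\<Sum>d\<in>Simp. k d * f d)" by (subst k(2)) (simp add: linear_sum[OF f] linear_scale[OF f])
  then have fsum: "f b = (\<Sum>d\<in>Simp. k d * f d)" .
  have "\<exists>d\<in>Simp. 0 < k d * f d"
  proof (rule ccontr)
    assume "\<not> ?thesis"
    then have "(\<Sum>d\<in>Simp. k d * f d) \<le> 0" by (intro sum_nonpos) (auto simp: not_less)
    then show False using fsum fb by simp
  qed
  then obtain d where d: "d \<in> Simp" "0 < k d * f d" by blast
  then have "0 < k d" "0 < f d" using k by (auto simp: zero_less_mult_iff)
  then show ?thesis using z d by auto
qed

lemma weyl_finite: "finite (weyl_group R)"
proof -
  have "inj_on (\<lambda>w. restrict w R) (weyl_group R)"
  proof (rule inj_onI)
    fix w1 w2 assume w: "w1 \<in> weyl_group R" "w2 \<in> weyl_group R" "restrict w1 R = restrict w2 R"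
    have "w1 x = w2 x" for x
    proof (rule real_vector.linear_eq_on_span[of w1 w2 R])
      show "linear w1" "linear w2" using w weyl_orth lin by auto
      show "\<And>x. x \<in> R \<Longrightarrow> w1 x = w2 x" using w(3) by (metis restrict_apply')
      show "x \<in> span R" using rs by (simp add: root_system_def)
    qed
    then show "w1 = w2" by auto
  qed
  moreover have "(\<lambda>w. restrict w R) ` weyl_group R \<subseteq> (\<Pi>\<^sub>E i\<in>R. R)" using weyl_R by auto
  moreover have "finite (\<Pi>\<^sub>E i\<in>R. R)" using finR by (simp add: finite_PiE)
  ultimately show ?thesis by (metis finite_imageD finite_subset)
qed

lemma dominant_iff: "dominant R \<rho> x \<longleftrightarrow> (\<forall>a\<in>P. 0 \<le> x \<bullet> a)"
proof -
  have "a \<in> P \<Longrightarrow> (0 \<le> cpair x a \<longleftrightarrow> 0 \<le> x \<bullet> a)" for a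
    using cpair_sign[OF PR[of a], of x] by linarith
  then show ?thesis unfolding dominant_def by auto
qed

definition "orbit x = (\<lambda>w. w x) ` weyl_group R"

lemma dominant_exists: "\<exists>mu\<in>orbit x. dominant R \<rho> mu"
proof -
  have fin: "finite (orbit x)" using weyl_finite by (simp add: orbit_def)
  have ne: "orbit x \<noteq> {}" using weyl_group.weyl_id by (auto simp: orbit_def)
  define m where "m = Max ((\<lambda>y. y \<bullet> \<rho>) ` orbit x)"
  have "m \<in> (\<lambda>y. y \<bullet> \<rho>) ` orbit x" using Max_in fin ne m_def by auto
  then obtain mu where mu: "mu \<in> orbit x" "mu \<bullet> \<rho> = m" by blast
  have ge: "y \<bullet> \<rho> \<le> m" if "y \<in> orbit x" for y using fin that m_def by auto
  have "dominant R \<rho> mu"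
  proof (rule ccontr)
    assume "\<not> dominant R \<rho> mu"
    then obtain a where a: "a \<in> P" "mu \<bullet> a < 0" by (auto simp: dominant_iff not_le)
    obtain w where w: "w \<in> weyl_group R" "mu = w x" using mu by (auto simp: orbit_def)
    have "refl_map a \<circ> w \<in> weyl_group R" using w a PR by (intro weyl_group.weyl_step) auto
    then have "(refl_map a \<circ> w) x \<in> orbit x" unfolding orbit_def by (rule imageI)
    then have "refl_map a mu \<in> orbit x" using w by simp
    moreover have "cpair mu a < 0" using cpair_sign[of a mu] a PR by auto
    then have "mu \<bullet> \<rho> < refl_map a mu \<bullet> \<rho>" using a
      by (simp add: refl_map_def inner_diff_left P_iff mult_neg_pos)
    ultimately show False using ge mu by fastforce
  qed
  then show ?thesis using mu by blast
qed

lemma dominant_unique_aux: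
  assumes mu: "dominant R \<rho> mu" and nu: "dominant R \<rho> nu"
  shows "u \<in> weyl_group R \<Longrightarrow> u mu = nu \<Longrightarrow> mu = nu"
proof (induction "wlen R \<rho> u" arbitrary: u rule: less_induct)
  case less
  show ?case
  proof (cases "wlen R \<rho> u = 0")
    case True
    then have "Nset u = {}" using finN by (simp add: wlen_N)
    then have "u ` P \<subseteq> id ` P" by (auto simp: Nset_def)
    then have "id = u" using weyl_unique[OF weyl_group.weyl_id less.prems(1)] by blast
    then show ?thesis using less.prems by simp
  next
    case False
    then have "Nset u \<noteq> {}" by (auto simp: wlen_N)
    then obtain b where b: "b \<in> P" "u b \<notin> P" by (auto simp: Nset_def)
    have uo: "orth u" using weyl_orth less.prems by auto
    have ubR: "u b \<in> R" using weyl_R less.prems b PR by auto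
    then have "- u b \<in> P" using b negR notP by (auto simp: P_iff)
    then have "0 \<le> nu \<bullet> (- u b)" using nu by (auto simp: dominant_iff)
    moreover have "nu \<bullet> u b = mu \<bullet> b" using inner_w[OF uo] less.prems by metis
    moreover have "0 \<le> mu \<bullet> b" using mu b by (auto simp: dominant_iff)
    ultimately have mb: "mu \<bullet> b = 0" by simp
    have lf: "linear (\<lambda>y. - (u y \<bullet> \<rho>))"
      using lin[OF uo] by (intro linearI) (auto simp: linear_add linear_scale inner_add_left)
    have "0 < - (u b \<bullet> \<rho>)" using b ubR notP by auto
    then obtain d where d: "d \<in> Simp" "mu \<bullet> d = 0" "0 < - (u d \<bullet> \<rho>)"
      using support[OF b(1) _ mb lf] mu SimpP by (auto simp: dominant_iff)
    have dR: "d \<in> R" using d SimpP PR by auto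
    define u' where "u' = u \<circ> refl_map d"
    have u'W: "u' \<in> weyl_group R" using weyl_refl less.prems dR u'_def by auto
    have "u' d \<in> P" using d refl_map_self[OF nz[OF dR]] weyl_neg[OF less.prems(1)] negR[OF weyl_R[OF less.prems(1) dR]]
      by (auto simp: u'_def P_iff)
    then have "wlen R \<rho> (u' \<circ> refl_map d) = Suc (wlen R \<rho> u')" using wlen_step d u'W by blast
    moreover have "u' \<circ> refl_map d = u" using refl_map_invol[OF nz[OF dR]] by (auto simp: u'_def fun_eq_iff)
    ultimately have "wlen R \<rho> u' < wlen R \<rho> u" by simp
    moreover have "u' mu = nu" using d less.prems cpair_sign[OF dR, of mu] by (simp add: u'_def refl_map_def)
    ultimately show ?thesis using less.hyps u'W by blast
  qed
qed

lemma dominant_unique: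
  assumes "mu \<in> orbit x" "nu \<in> orbit x" "dominant R \<rho> mu" "dominant R \<rho> nu"
  shows "mu = nu"
proof -
  obtain w1 w2 where w: "w1 \<in> weyl_group R" "w2 \<in> weyl_group R" "mu = w1 x" "nu = w2 x"
    using assms by (auto simp: orbit_def)
  obtain v where v: "v \<in> weyl_group R" "v \<circ> w1 = id" using weyl_inv w by blast
  have "(w2 \<circ> v) mu = nu" using v w by (metis comp_apply id_apply)
  moreover have "w2 \<circ> v \<in> weyl_group R" using weyl_comp w v by blast
  ultimately show ?thesis using dominant_unique_aux assms by blast
qed

lemma dom_weight: "dom_weight R \<rho> x \<in> orbit x \<and> dominant R \<rho> (dom_weight R \<rho> x)"
proof -
  obtain mu where mu: "mu \<in> orbit x" "dominant R \<rho> mu" using dominant_exists by blast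
  have "\<exists>!mu. mu \<in> orbit x \<and> dominant R \<rho> mu"
    by (rule ex1I[of _ mu]) (use mu dominant_unique[of _ x mu] in blast)+
  then show ?thesis unfolding dom_weight_def orbit_def[symmetric] by (rule theI')
qed

end

context rs begin

lemma bruhat_mono: "bruhat_le R \<rho> u v \<Longrightarrow> u = v \<or> wlen R \<rho> u < wlen R \<rho> v"
  unfolding bruhat_le_def
proof (induction rule: rtranclp_induct)
  case base then show ?case by simp
next
  case (step y z) then show ?case by (auto simp: bruhat_step_def)
qed

definition "Sw lam = pos_gt R \<rho> lam \<union> uminus ` pos_lt R \<rho> lam \<union> uminus ` pos_eq R \<rho> lam"

definition "terminal lam t \<longleftrightarrow> t \<in> weyl_group R \<and> t (dom_weight R \<rho> lam) = lam \<and>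
   (\<forall>b\<in>P. dom_weight R \<rho> lam \<bullet> b = 0 \<longrightarrow> t b \<notin> P)"

lemma terminal_exists:
  "v \<in> weyl_group R \<Longrightarrow> v (dom_weight R \<rho> lam) = lam \<Longrightarrow> \<exists>t. terminal lam t \<and> bruhat_le R \<rho> v t"
proof (induction "card P - wlen R \<rho> v" arbitrary: v rule: less_induct)
  case less
  define lp where "lp = dom_weight R \<rho> lam"
  have lpd: "dominant R \<rho> lp" using dom_weight lp_def by blast
  show ?case
  proof (cases "terminal lam v")
    case True
    then show ?thesis by (intro exI[of _ v]) (auto simp: bruhat_le_def)
  next
    case False
    then obtain b where b: "b \<in> P" "lp \<bullet> b = 0" "v b \<in> P" using less.prems by (auto simp: terminal_def lp_def)
    have vo: "orth v" using weyl_orth less.prems by auto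
    have lf: "linear (\<lambda>y. v y \<bullet> \<rho>)"
      using lin[OF vo] by (intro linearI) (auto simp: linear_add linear_scale inner_add_left)
    obtain d where d: "d \<in> Simp" "lp \<bullet> d = 0" "0 < v d \<bullet> \<rho>"
      using support[OF b(1) _ b(2) lf] b lpd SimpP by (auto simp: dominant_iff P_iff)
    have dR: "d \<in> R" using d SimpP PR by auto
    have vd: "v d \<in> P" using d weyl_R[OF less.prems(1) dR] by (simp add: P_iff)
    define v' where "v' = v \<circ> refl_map d"
    have v'W: "v' \<in> weyl_group R" using weyl_refl less.prems dR v'_def by auto
    have wl: "wlen R \<rho> v' = Suc (wlen R \<rho> v)" using wlen_step[OF d(1) less.prems(1) vd] v'_def by simp
    have v'l: "v' lp = lam" using d less.prems cpair_sign[OF dR, of lp] lp_def by (simp add: v'_def refl_map_def)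
    have "card P - wlen R \<rho> v' < card P - wlen R \<rho> v" using wl wlen_le[of v'] by simp
    have v'l2: "v' (dom_weight R \<rho> lam) = lam" using v'l lp_def by simp
    obtain t where t: "terminal lam t" "bruhat_le R \<rho> v' t" using less.hyps[OF _ v'W v'l2] \<open>card P - _ < _\<close> by blast
    have "bruhat_step R \<rho> v v'" using less.prems dR wl by (auto simp: bruhat_step_def v'_def)
    then have "bruhat_le R \<rho> v t" using t(2) unfolding bruhat_le_def
      by (rule converse_rtranclp_into_rtranclp)
    then show ?thesis using t by blast
  qed
qed

lemma finSw: "finite (Sw lam)"
  using finP by (simp add: Sw_def pos_gt_def pos_lt_def pos_eq_def)

lemma card_Sw: "card (Sw lam) \<le> card P"
proof -
  define phi where "phi y = (if y \<in> pos_gt R \<rho> lam then y else - y)" for y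
  have "Sw lam \<subseteq> phi ` P"
  proof
    fix x assume "x \<in> Sw lam"
    then consider "x \<in> pos_gt R \<rho> lam" | y where "y \<in> pos_lt R \<rho> lam \<union> pos_eq R \<rho> lam" "x = - y"
      unfolding Sw_def by blast
    then show "x \<in> phi ` P"
    proof cases
      case 1 then show ?thesis by (force simp: phi_def pos_gt_def)
    next
      case 2
      then have "y \<in> P" "y \<notin> pos_gt R \<rho> lam" by (auto simp: pos_gt_def pos_lt_def pos_eq_def)
      then show ?thesis using 2 by (force simp: phi_def)
    qed
  qed
  then have "card (Sw lam) \<le> card (phi ` P)" using finP by (intro card_mono) auto
  also have "\<dots> \<le> card P" using finP by (rule card_image_le)
  finally show ?thesis .
qed

lemma terminal_image:
  assumes t: "terminal lam t" shows "t ` P = Sw lam"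
proof -
  define lp where "lp = dom_weight R \<rho> lam"
  have lpd: "dominant R \<rho> lp" using dom_weight lp_def by blast
  have tW: "t \<in> weyl_group R" and tl: "t lp = lam" and trm: "\<forall>b\<in>P. lp \<bullet> b = 0 \<longrightarrow> t b \<notin> P"
    using t by (auto simp: terminal_def lp_def)
  have to: "orth t" using weyl_orth tW by auto
  have sub: "t ` P \<subseteq> Sw lam"
  proof
    fix x assume "x \<in> t ` P"
    then obtain b where b: "b \<in> P" "x = t b" by blast
    have xR: "x \<in> R" using b weyl_R[OF tW] PR by auto
    have nxR: "- x \<in> R" using negR xR by auto
    have eq: "lam \<bullet> x = lp \<bullet> b" using inner_w[OF to] tl b by metis
    have ge: "0 \<le> lp \<bullet> b" using lpd b by (auto simp: dominant_iff)
    show "x \<in> Sw lam"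
    proof (cases "lp \<bullet> b = 0")
      case True
      then have "x \<notin> P" using trm b by auto
      then have "- x \<in> P" using xR nxR notP by (auto simp: P_iff)
      moreover have "cpair lam (- x) = 0" using cpair_sign[OF nxR, of lam] eq True by simp
      ultimately have "- x \<in> pos_eq R \<rho> lam" by (simp add: pos_eq_def)
      then have "- (- x) \<in> uminus ` pos_eq R \<rho> lam" by blast
      then show ?thesis by (simp add: Sw_def)
    next
      case False
      then have pos: "0 < lam \<bullet> x" using eq ge by simp
      show ?thesis
      proof (cases "x \<in> P")
        case True
        then have "x \<in> pos_gt R \<rho> lam" using cpair_sign[OF xR, of lam] pos by (simp add: pos_gt_def)
        then show ?thesis by (simp add: Sw_def)
      next
        case False
        then have "- x \<in> P" using xR nxR notP by (auto simp: P_iff)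
        moreover have "cpair lam (- x) < 0" using cpair_sign[OF nxR, of lam] pos by simp
        ultimately have "- x \<in> pos_lt R \<rho> lam" by (simp add: pos_lt_def)
        then have "- (- x) \<in> uminus ` pos_lt R \<rho> lam" by blast
        then show ?thesis by (simp add: Sw_def)
      qed
    qed
  qed
  have "card (t ` P) = card P" using orth_inj[OF to] by (simp add: card_image inj_on_def inj_def)
  then show ?thesis using card_seteq[OF finSw sub] card_Sw by simp
qed

lemma w_of_image: "w_of R \<rho> lam ` P = Sw lam"
proof -
  define lp where "lp = dom_weight R \<rho> lam"
  obtain w0 where w0: "w0 \<in> weyl_group R" "lp = w0 lam" using dom_weight[of lam] lp_def by (auto simp: orbit_def)
  obtain v0 where v0: "v0 \<in> weyl_group R" "v0 \<circ> w0 = id" using weyl_inv w0 by blast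
  have v0l: "v0 lp = lam" using v0 w0 by (metis comp_apply id_apply)
  have v0l2: "v0 (dom_weight R \<rho> lam) = lam" using v0l lp_def by simp
  obtain t where t: "terminal lam t" using terminal_exists[OF v0(1) v0l2] by blast
  have tW: "t \<in> weyl_group R" and tl: "t lp = lam" using t by (auto simp: terminal_def lp_def)
  have all: "bruhat_le R \<rho> v t" if vW: "v \<in> weyl_group R" and vl: "v lp = lam" for v
  proof -
    have vl2: "v (dom_weight R \<rho> lam) = lam" using vl lp_def by simp
    obtain t' where t': "terminal lam t'" "bruhat_le R \<rho> v t'" using terminal_exists[OF vW vl2] by blast
    have "t' ` P = t ` P" using terminal_image t t' by simp
    then have "t = t'" using weyl_unique[OF tW] t' by (auto simp: terminal_def)
    then show ?thesis using t' by simp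
  qed
  have "w_of R \<rho> lam = t"
    unfolding w_of_def lp_def[symmetric]
  proof (rule the_equality)
    show "t \<in> weyl_group R \<and> t lp = lam \<and> (\<forall>v\<in>weyl_group R. v lp = lam \<longrightarrow> bruhat_le R \<rho> v t)"
      using tW tl all by blast
  next
    fix w assume w: "w \<in> weyl_group R \<and> w lp = lam \<and> (\<forall>v\<in>weyl_group R. v lp = lam \<longrightarrow> bruhat_le R \<rho> v w)"
    then have "bruhat_le R \<rho> t w" using tW tl by blast
    moreover have "bruhat_le R \<rho> w t" using all w by blast
    ultimately have "t = w \<or> wlen R \<rho> t < wlen R \<rho> w" "w = t \<or> wlen R \<rho> w < wlen R \<rho> t"
      using bruhat_mono by blast+
    then show "w = t" by auto
  qed
  then show ?thesis using terminal_image t by simp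
qed

end


definition lexo :: "('a \<Rightarrow> nat) \<Rightarrow> ('a \<Rightarrow> 'b) \<Rightarrow> 'b rel \<Rightarrow> 'a set \<Rightarrow> 'a rel" where
  "lexo k s r X = {(a, b). a \<in> X \<and> b \<in> X \<and> (k a < k b \<or> (k a = k b \<and> (s a, s b) \<in> r))}"

lemma sto_asym: "strict_total_order_on S r \<Longrightarrow> (a, b) \<in> r \<Longrightarrow> (b, a) \<notin> r"
  unfolding strict_total_order_on_def irrefl_def trans_def by blast

lemma sto_trans: "strict_total_order_on S r \<Longrightarrow> (a, b) \<in> r \<Longrightarrow> (b, c) \<in> r \<Longrightarrow> (a, c) \<in> r"
  unfolding strict_total_order_on_def trans_def by blast

lemma sto_sub: "strict_total_order_on S r \<Longrightarrow> (a, b) \<in> r \<Longrightarrow> a \<in> S \<and> b \<in> S"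
  unfolding strict_total_order_on_def by blast

lemma sto_total: "strict_total_order_on S r \<Longrightarrow> a \<in> S \<Longrightarrow> b \<in> S \<Longrightarrow> a \<noteq> b \<Longrightarrow> (a, b) \<in> r \<or> (b, a) \<in> r"
  unfolding strict_total_order_on_def total_on_def by blast

lemma lex_sto:
  assumes r: "strict_total_order_on Y r" and s: "\<forall>a\<in>X. s a \<in> Y" and inj: "inj_on s X"
  shows "strict_total_order_on X (lexo k s r X)"
  unfolding strict_total_order_on_def
proof (intro conjI)
  show "lexo k s r X \<subseteq> X \<times> X" by (auto simp: lexo_def)
  show "irrefl (lexo k s r X)" using sto_asym[OF r] by (auto simp: lexo_def irrefl_def)
  show "trans (lexo k s r X)" using sto_trans[OF r] unfolding trans_def lexo_def
    by auto
  show "total_on X (lexo k s r X)"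
  proof (unfold total_on_def, intro ballI impI)
    fix a b assume ab: "a \<in> X" "b \<in> X" "a \<noteq> b"
    then have "s a \<noteq> s b" using inj by (auto simp: inj_on_def)
    then have "(s a, s b) \<in> r \<or> (s b, s a) \<in> r" using sto_total[OF r] s ab by auto
    then show "(a, b) \<in> lexo k s r X \<or> (b, a) \<in> lexo k s r X" using ab by (auto simp: lexo_def)
  qed
qed

lemma lex_roundtrip:
  assumes r: "strict_total_order_on X r" and blk: "\<forall>a\<in>X. \<forall>b\<in>X. k a < k b \<longrightarrow> (a, b) \<in> r"
    and s: "\<forall>a\<in>X. s a \<in> Y \<and> s' (s a) = a" and kk: "\<forall>a\<in>X. \<forall>b\<in>X. k' (s a) = k' (s b) \<longleftrightarrow> k a = k b"
  shows "lexo k s (lexo k' s' r Y) X = r"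
proof (intro set_eqI, clarify)
  fix a b
  show "(a, b) \<in> lexo k s (lexo k' s' r Y) X \<longleftrightarrow> (a, b) \<in> r"
  proof
    assume "(a, b) \<in> lexo k s (lexo k' s' r Y) X"
    then have ab: "a \<in> X" "b \<in> X" and "k a < k b \<or> (k a = k b \<and> (s a, s b) \<in> lexo k' s' r Y)"
      by (auto simp: lexo_def)
    moreover have "k a = k b \<Longrightarrow> k' (s a) = k' (s b)" using kk ab by blast
    ultimately show "(a, b) \<in> r" using blk s by (auto simp: lexo_def)
  next
    assume ab: "(a, b) \<in> r"
    then have X: "a \<in> X" "b \<in> X" using sto_sub[OF r] by auto
    show "(a, b) \<in> lexo k s (lexo k' s' r Y) X"
    proof (cases "k a = k b")
      case True then show ?thesis using X ab s kk by (auto simp: lexo_def)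
    next
      case False
      then have "k a < k b" using blk X ab sto_asym[OF r] by (metis linorder_neqE_nat)
      then show ?thesis using X by (auto simp: lexo_def)
    qed
  qed
qed



lemma lexI1: "a \<in> X \<Longrightarrow> b \<in> X \<Longrightarrow> k a < k b \<Longrightarrow> (a, b) \<in> lexo k s r X"
  by (simp add: lexo_def)
lemma lexI2: "a \<in> X \<Longrightarrow> b \<in> X \<Longrightarrow> k a = k b \<Longrightarrow> (s a, s b) \<in> r \<Longrightarrow> (a, b) \<in> lexo k s r X"
  by (simp add: lexo_def)

definition betw :: "'a::ab_group_add rel \<Rightarrow> 'a \<Rightarrow> 'a \<Rightarrow> bool" where
  "betw Q a b \<longleftrightarrow> ((a, a + b) \<in> Q \<and> (a + b, b) \<in> Q) \<or> ((b, a + b) \<in> Q \<and> (a + b, a) \<in> Q)"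

lemma betw_sym: "betw Q a b = betw Q b a" by (auto simp: betw_def add.commute)

lemma reflection_order_betw: "reflection_order S r \<longleftrightarrow> strict_total_order_on S r \<and>
   (\<forall>a\<in>S. \<forall>b\<in>S. a + b \<in> S \<longrightarrow> betw r a b)"
  by (simp add: reflection_order_def betw_def)

locale rsl = rs +
  fixes lam :: 'a
begin

definition "kb x = (if lam \<bullet> x < 0 then 0 else if lam \<bullet> x = 0 then 1 else (2::nat))"
definition "kw x = (if 0 < x \<bullet> \<rho> then 0 else if 0 < lam \<bullet> x then 1 else (2::nat))"
definition "sb x = (if 0 < lam \<bullet> x then x else - x)"
definition "sw x = (if 0 < x \<bullet> \<rho> then x else - x)"

abbreviation "SW \<equiv> Sw lam"

lemma neg_img: "(x::'a) \<in> uminus ` A \<longleftrightarrow> - x \<in> A"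
proof
  assume "- x \<in> A" then have "- (- x) \<in> uminus ` A" by (rule imageI)
  then show "x \<in> uminus ` A" by (simp only: minus_minus)
qed auto

lemma negR_iff: "- x \<in> R \<longleftrightarrow> x \<in> R" using negR by force

lemma gt_iff: "x \<in> pos_gt R \<rho> lam \<longleftrightarrow> x \<in> R \<and> 0 < x \<bullet> \<rho> \<and> 0 < lam \<bullet> x"
  using cpair_sign[of x lam] by (auto simp: pos_gt_def P_iff)
lemma lt_iff: "x \<in> pos_lt R \<rho> lam \<longleftrightarrow> x \<in> R \<and> 0 < x \<bullet> \<rho> \<and> lam \<bullet> x < 0"
  using cpair_sign[of x lam] by (auto simp: pos_lt_def P_iff)
lemma eq_iff: "x \<in> pos_eq R \<rho> lam \<longleftrightarrow> x \<in> R \<and> 0 < x \<bullet> \<rho> \<and> lam \<bullet> x = 0"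
  using cpair_sign[of x lam] by (auto simp: pos_eq_def P_iff)

lemma SW_iff: "x \<in> SW \<longleftrightarrow> x \<in> R \<and> (0 < lam \<bullet> x \<or> (lam \<bullet> x = 0 \<and> x \<bullet> \<rho> < 0))"
proof -
  have "x \<in> R \<Longrightarrow> x \<bullet> \<rho> \<noteq> 0" using regR by blast
  then show ?thesis unfolding Sw_def
    by (auto simp: neg_img gt_iff lt_iff eq_iff negR_iff)
qed

lemma SW_R: "x \<in> SW \<Longrightarrow> x \<in> R" by (simp add: SW_iff)

lemma kwP:
  assumes "x \<in> SW"
  shows "(kw x = 0 \<longrightarrow> x \<in> P \<and> kb x = 2 \<and> sw x = x \<and> sb x = x) \<and>
         (kw x = 1 \<longrightarrow> - x \<in> P \<and> kb (- x) = 0 \<and> sw x = - x \<and> sb (- x) = x) \<and>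
         (kw x = 2 \<longrightarrow> - x \<in> P \<and> kb (- x) = 1 \<and> sw x = - x \<and> sb (- x) = x) \<and> kw x \<le> 2"
proof -
  have "x \<in> R" "x \<bullet> \<rho> \<noteq> 0" using assms regR SW_iff by auto
  then show ?thesis using assms by (auto simp: kw_def kb_def sw_def sb_def SW_iff P_iff negR_iff)
qed

lemma kbP:
  assumes "x \<in> P"
  shows "(kb x = 0 \<longrightarrow> - x \<in> SW \<and> kw (- x) = 1 \<and> sb x = - x \<and> sw (- x) = x) \<and>
         (kb x = 1 \<longrightarrow> - x \<in> SW \<and> kw (- x) = 2 \<and> sb x = - x \<and> sw (- x) = x) \<and>
         (kb x = 2 \<longrightarrow> x \<in> SW \<and> kw x = 0 \<and> sb x = x \<and> sw x = x) \<and> kb x \<le> 2"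
  using assms by (auto simp: kw_def kb_def sw_def sb_def SW_iff P_iff negR_iff)

lemma G0: "a \<in> pos_gt R \<rho> lam \<longleftrightarrow> a \<in> SW \<and> kw a = 0"
  using regR[of a] by (auto simp: gt_iff SW_iff kw_def)
lemma G1: "a \<in> uminus ` pos_lt R \<rho> lam \<longleftrightarrow> a \<in> SW \<and> kw a = 1"
  using regR[of a] by (auto simp: neg_img lt_iff SW_iff kw_def negR_iff)
lemma G2: "a \<in> uminus ` pos_eq R \<rho> lam \<longleftrightarrow> a \<in> SW \<and> kw a = 2"
  using regR[of a] by (auto simp: neg_img eq_iff SW_iff kw_def negR_iff)
lemma kw3: "kw a = 0 \<or> kw a = 1 \<or> kw a = 2" by (auto simp: kw_def)
lemma kb3: "kb a = 0 \<or> kb a = 1 \<or> kb a = 2" by (auto simp: kb_def)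
lemma sw_kw: "sw a = (if kw a = 0 then a else - a)" by (auto simp: sw_def kw_def)

lemma ind_eq: "induced_order R \<rho> lam r = lexo kw sw r SW"
proof (rule set_eqI, clarify)
  fix a b
  show "(a, b) \<in> induced_order R \<rho> lam r \<longleftrightarrow> (a, b) \<in> lexo kw sw r SW"
    unfolding induced_order_def lexo_def Un_iff mem_Collect_eq case_prod_conv G0 G1 G2
    using kw3[of a] kw3[of b] by (elim disjE) (simp_all add: sw_kw)
qed

lemma L0: "a \<in> pos_lt R \<rho> lam \<longleftrightarrow> a \<in> P \<and> kb a = 0"
  by (auto simp: lt_iff P_iff kb_def)
lemma L1: "a \<in> pos_eq R \<rho> lam \<longleftrightarrow> a \<in> P \<and> kb a = 1"
  by (auto simp: eq_iff P_iff kb_def)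
lemma L2: "a \<in> pos_gt R \<rho> lam \<longleftrightarrow> a \<in> P \<and> kb a = 2"
  by (auto simp: gt_iff P_iff kb_def)

lemma blk_p: "((\<forall>\<alpha>\<in>pos_lt R \<rho> lam. \<forall>\<beta>\<in>pos_eq R \<rho> lam. (\<alpha>, \<beta>) \<in> r) \<and>
     (\<forall>\<beta>\<in>pos_eq R \<rho> lam. \<forall>\<gamma>\<in>pos_gt R \<rho> lam. (\<beta>, \<gamma>) \<in> r) \<and>
     (\<forall>\<alpha>\<in>pos_lt R \<rho> lam. \<forall>\<gamma>\<in>pos_gt R \<rho> lam. (\<alpha>, \<gamma>) \<in> r)) \<longleftrightarrow>
   (\<forall>a\<in>P. \<forall>b\<in>P. kb a < kb b \<longrightarrow> (a, b) \<in> r)" (is "?L \<longleftrightarrow> ?R")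
proof
  assume L: ?L
  show ?R
  proof (intro ballI impI)
    fix a b assume ab: "a \<in> P" "b \<in> P" "kb a < kb b"
    then have "(kb a = 0 \<and> kb b = 1) \<or> (kb a = 1 \<and> kb b = 2) \<or> (kb a = 0 \<and> kb b = 2)"
      using kb3[of a] kb3[of b] by auto
    then show "(a, b) \<in> r" using L ab unfolding Ball_def L0 L1 L2 by blast
  qed
next
  assume R: ?R
  show ?L using R unfolding Ball_def L0 L1 L2 by simp
qed

lemma ROpos_eq: "RO_pos R \<rho> lam = {r. reflection_order P r \<and> (\<forall>a\<in>P. \<forall>b\<in>P. kb a < kb b \<longrightarrow> (a, b) \<in> r)}"
  unfolding RO_pos_def blk_p by (rule refl)

lemma blk_w: "((\<forall>\<gamma>\<in>pos_gt R \<rho> lam. \<forall>\<alpha>\<in>pos_lt R \<rho> lam. (\<gamma>, -\<alpha>) \<in> q) \<and>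
     (\<forall>\<alpha>\<in>pos_lt R \<rho> lam. \<forall>\<beta>\<in>pos_eq R \<rho> lam. (-\<alpha>, -\<beta>) \<in> q) \<and>
     (\<forall>\<gamma>\<in>pos_gt R \<rho> lam. \<forall>\<beta>\<in>pos_eq R \<rho> lam. (\<gamma>, -\<beta>) \<in> q)) \<longleftrightarrow>
   (\<forall>a\<in>SW. \<forall>b\<in>SW. kw a < kw b \<longrightarrow> (a, b) \<in> q)" (is "?L \<longleftrightarrow> ?R")
proof
  assume L: ?L
  show ?R
  proof (intro ballI impI)
    fix a b assume ab: "a \<in> SW" "b \<in> SW" "kw a < kw b"
    have ra: "a \<in> R" and rb: "b \<in> R" using ab SW_R by auto
    have "a \<bullet> \<rho> \<noteq> 0" "b \<bullet> \<rho> \<noteq> 0" using regR ra rb by auto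
    then consider "a \<in> pos_gt R \<rho> lam" "- b \<in> pos_lt R \<rho> lam" | "- a \<in> pos_lt R \<rho> lam" "- b \<in> pos_eq R \<rho> lam"
      | "a \<in> pos_gt R \<rho> lam" "- b \<in> pos_eq R \<rho> lam"
      using ab ra rb by (auto simp: kw_def SW_iff gt_iff lt_iff eq_iff negR_iff split: if_splits)
    then have "(a, - (- b)) \<in> q \<or> (- (- a), - (- b)) \<in> q" using L by cases blast+
    then show "(a, b) \<in> q" by (simp only: minus_minus disj_absorb)
  qed
next
  assume R: ?R
  have g: "x \<in> pos_gt R \<rho> lam \<Longrightarrow> x \<in> SW \<and> kw x = 0" for x by (auto simp: gt_iff SW_iff kw_def)
  have l: "x \<in> pos_lt R \<rho> lam \<Longrightarrow> - x \<in> SW \<and> kw (- x) = 1" for x by (auto simp: lt_iff SW_iff kw_def negR_iff)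
  have e: "x \<in> pos_eq R \<rho> lam \<Longrightarrow> - x \<in> SW \<and> kw (- x) = 2" for x by (auto simp: eq_iff SW_iff kw_def negR_iff)
  show ?L
  proof (intro conjI ballI)
    fix x y assume "x \<in> pos_gt R \<rho> lam" "y \<in> pos_lt R \<rho> lam"
    then show "(x, - y) \<in> q" using R g[of x] l[of y] by auto
  next
    fix x y assume "x \<in> pos_lt R \<rho> lam" "y \<in> pos_eq R \<rho> lam"
    then show "(- x, - y) \<in> q" using R l[of x] e[of y] by auto
  next
    fix x y assume "x \<in> pos_gt R \<rho> lam" "y \<in> pos_eq R \<rho> lam"
    then show "(x, - y) \<in> q" using R g[of x] e[of y] by auto
  qed
qed

lemma ROw_eq: "RO_w R \<rho> lam = {q. reflection_order SW q \<and> (\<forall>a\<in>SW. \<forall>b\<in>SW. kw a < kw b \<longrightarrow> (a, b) \<in> q)}"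
  unfolding RO_w_def w_of_image blk_w by (rule refl)

end

context rsl begin

lemma kw_vals: "x \<in> SW \<Longrightarrow> (kw x = 0 \<longleftrightarrow> 0 < x \<bullet> \<rho>) \<and> (kw x = 1 \<longleftrightarrow> x \<bullet> \<rho> < 0 \<and> 0 < lam \<bullet> x)
   \<and> (kw x = 2 \<longleftrightarrow> lam \<bullet> x = 0)"
  using regR[of x] by (auto simp: kw_def SW_iff)

lemma kb_vals: "(kb x = 0 \<longleftrightarrow> lam \<bullet> x < 0) \<and> (kb x = 1 \<longleftrightarrow> lam \<bullet> x = 0) \<and> (kb x = 2 \<longleftrightarrow> 0 < lam \<bullet> x)"
  by (auto simp: kb_def)

lemma kw_pos: "x \<in> SW \<Longrightarrow> kw x \<noteq> 2 \<Longrightarrow> 0 < lam \<bullet> x"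
  by (auto simp: kw_def SW_iff)

lemma refl_fwd:
  assumes r: "strict_total_order_on P r" and blk: "\<forall>a\<in>P. \<forall>b\<in>P. kb a < kb b \<longrightarrow> (a, b) \<in> r"
    and RB: "\<forall>x\<in>P. \<forall>y\<in>P. x + y \<in> P \<longrightarrow> betw r x y"
    and a: "a \<in> SW" and b: "b \<in> SW" and c: "a + b \<in> SW" and le: "kw a \<le> kw b"
  shows "betw (lexo kw sw r SW) a b"
proof -
  define c where "c = a + b"
  have cS: "c \<in> SW" using c c_def by simp
  have lc: "lam \<bullet> c = lam \<bullet> a + lam \<bullet> b" and hc: "c \<bullet> \<rho> = a \<bullet> \<rho> + b \<bullet> \<rho>"
    by (simp_all add: c_def inner_add_left inner_add_right)
  note KA = kwP[OF a] and KB = kwP[OF b] and KC = kwP[OF cS]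
  note VA = kw_vals[OF a] and VB = kw_vals[OF b] and VC = kw_vals[OF cS]
  let ?Q = "lexo kw sw r SW"
  have asym: "(x, y) \<in> r \<Longrightarrow> (y, x) \<notin> r" for x y using sto_asym[OF r] by blast
  have tr: "(x, y) \<in> r \<Longrightarrow> (y, z) \<in> r \<Longrightarrow> (x, z) \<in> r" for x y z using sto_trans[OF r] by blast
  consider "kw a = kw b" "kw c = kw a" | "kw a = 1" "kw b = 2" | "kw a = 0" "kw b = 2" | "kw a = 0" "kw b = 1"
  proof -
    have "(kw a = kw b \<and> kw c = kw a) \<or> (kw a = 1 \<and> kw b = 2) \<or> (kw a = 0 \<and> kw b = 2) \<or> (kw a = 0 \<and> kw b = 1)"
      using kw3[of a] kw3[of b] le
    proof (elim disjE)
    qed (use VA VB VC lc hc in auto)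
    then show ?thesis using that by blast
  qed
  then show ?thesis
  proof cases
    case 1
    have sw_add: "sw c = sw a + sw b" using 1 VA VB VC kw3[of a] by (auto simp: sw_kw c_def)
    have "sw a \<in> P" "sw b \<in> P" "sw c \<in> P" using KA KB KC 1 kw3[of a] by auto
    then have "betw r (sw a) (sw b)" using RB sw_add by auto
    then show ?thesis using 1 a b cS sw_add unfolding betw_def c_def[symmetric]
      by (auto intro: lexI2)
  next
    case 2
    then have kc: "kw c = 1" using VA VB VC lc hc by auto
    have "- a \<in> P" "- b \<in> P" "- c \<in> P" "kb (- a) = 0" "kb (- b) = 1" using KA KB KC 2 kc by auto
    then have br: "betw r (- a) (- b)" and ab: "(- a, - b) \<in> r" using RB blk by (auto simp: c_def)
    then have "(- a, - c) \<in> r" unfolding betw_def c_def using asym tr by (metis minus_add_distrib add.commute)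
    then have "(a, c) \<in> ?Q" using a cS 2 kc KA KC by (intro lexI2) auto
    moreover have "(c, b) \<in> ?Q" using cS b kc 2 by (intro lexI1) auto
    ultimately show ?thesis by (simp add: betw_def c_def)
  next
    case 3
    have "0 < lam \<bullet> a" using kw_pos[OF a] 3 by simp
    then have "kw c \<noteq> 2" using VB VC lc 3 by simp
    then have "kw c = 0 \<or> kw c = 1" using kw3[of c] by auto
    then show ?thesis
    proof
      assume kc: "kw c = 1"
      then show ?thesis using a b cS 3 unfolding betw_def c_def[symmetric] by (auto intro: lexI1)
    next
      assume kc: "kw c = 0"
      have P: "c \<in> P" "- b \<in> P" "a \<in> P" "kb c = 2" "kb (- b) = 1" using KA KB KC 3 kc by auto
      have s: "c + - b = a" by (simp add: c_def)
      have "betw r c (- b)" using RB P s by auto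
      moreover have "(- b, c) \<in> r" using blk P by auto
      ultimately have "(a, c) \<in> r" unfolding betw_def s using asym tr by blast
      then have "(a, c) \<in> ?Q" using a cS 3 kc KA KC by (intro lexI2) auto
      moreover have "(c, b) \<in> ?Q" using cS b kc 3 by (intro lexI1) auto
      ultimately show ?thesis by (simp add: betw_def c_def)
    qed
  next
    case 4
    have "0 < lam \<bullet> a" "0 < lam \<bullet> b" using kw_pos[OF a] kw_pos[OF b] 4 by simp_all
    then have "kw c \<noteq> 2" using VC lc by simp
    then have "kw c = 0 \<or> kw c = 1" using kw3[of c] by auto
    then show ?thesis
    proof
      assume kc: "kw c = 0"
      have P: "c \<in> P" "- b \<in> P" "a \<in> P" "kb c = 2" "kb (- b) = 0" using KA KB KC 4 kc by auto
      have s: "c + - b = a" by (simp add: c_def)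
      have "betw r c (- b)" using RB P s by auto
      moreover have "(- b, c) \<in> r" using blk P by auto
      ultimately have "(a, c) \<in> r" unfolding betw_def s using asym tr by blast
      then have "(a, c) \<in> ?Q" using a cS 4 kc KA KC by (intro lexI2) auto
      moreover have "(c, b) \<in> ?Q" using cS b kc 4 by (intro lexI1) auto
      ultimately show ?thesis by (simp add: betw_def c_def)
    next
      assume kc: "kw c = 1"
      have P: "- c \<in> P" "a \<in> P" "- b \<in> P" "kb (- c) = 0" "kb a = 2" using KA KB KC 4 kc by auto
      have s: "- c + a = - b" by (simp add: c_def)
      have "betw r (- c) a" using RB P s by auto
      moreover have "(- c, a) \<in> r" using blk P by auto
      ultimately have "(- c, - b) \<in> r" unfolding betw_def s using asym tr by blast
      then have "(c, b) \<in> ?Q" using b cS 4 kc KB KC by (intro lexI2) auto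
      moreover have "(a, c) \<in> ?Q" using cS a kc 4 by (intro lexI1) auto
      ultimately show ?thesis by (simp add: betw_def c_def)
    qed
  qed
qed

end

context rsl begin

lemma sb_kb: "sb x = (if kb x = 2 then x else - x)" by (auto simp: sb_def kb_def)

lemma refl_bwd:
  assumes q: "strict_total_order_on SW q" and blk: "\<forall>a\<in>SW. \<forall>b\<in>SW. kw a < kw b \<longrightarrow> (a, b) \<in> q"
    and RB: "\<forall>x\<in>SW. \<forall>y\<in>SW. x + y \<in> SW \<longrightarrow> betw q x y"
    and a: "a \<in> P" and b: "b \<in> P" and c: "a + b \<in> P" and le: "kb a \<le> kb b"
  shows "betw (lexo kb sb q P) a b"
proof -
  define c where "c = a + b"
  have cP: "c \<in> P" using c c_def by simp
  have lc: "lam \<bullet> c = lam \<bullet> a + lam \<bullet> b"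
    by (simp_all add: c_def inner_add_left inner_add_right)
  note KA = kbP[OF a] and KB = kbP[OF b] and KC = kbP[OF cP]
  note VA = kb_vals[of a] and VB = kb_vals[of b] and VC = kb_vals[of c]
  let ?Q = "lexo kb sb q P"
  have asym: "(x, y) \<in> q \<Longrightarrow> (y, x) \<notin> q" for x y using sto_asym[OF q] by blast
  have tr: "(x, y) \<in> q \<Longrightarrow> (y, z) \<in> q \<Longrightarrow> (x, z) \<in> q" for x y z using sto_trans[OF q] by blast
  have "(kb a = kb b \<and> kb c = kb a) \<or> (kb a = 0 \<and> kb b = 1) \<or> (kb a = 1 \<and> kb b = 2) \<or> (kb a = 0 \<and> kb b = 2)"
    using kb3[of a] kb3[of b] le
  proof (elim disjE)
  qed (use VA VB VC lc in auto)
  then consider "kb a = kb b" "kb c = kb a" | "kb a = 0" "kb b = 1" | "kb a = 1" "kb b = 2" | "kb a = 0" "kb b = 2"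
    by (elim disjE conjE) metis+
  then show ?thesis
  proof cases
    case 1
    have sb_add: "sb c = sb a + sb b" using 1 by (auto simp: sb_kb c_def)
    have "sb a \<in> SW" "sb b \<in> SW" "sb c \<in> SW" using KA KB KC 1 kb3[of a] by auto
    then have "betw q (sb a) (sb b)" using RB sb_add by auto
    then show ?thesis using 1 a b cP sb_add unfolding betw_def c_def[symmetric]
      by (auto intro: lexI2)
  next
    case 2
    then have kc: "kb c = 0" using VA VB VC lc by auto
    have S: "- a \<in> SW" "- b \<in> SW" "- c \<in> SW" "kw (- a) = 1" "kw (- b) = 2" using KA KB KC 2 kc by auto
    have s: "- a + - b = - c" by (simp add: c_def)
    have "betw q (- a) (- b)" using RB S s by auto
    moreover have "(- a, - b) \<in> q" using blk S by auto
    ultimately have "(- a, - c) \<in> q" unfolding betw_def s using asym tr by blast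
    then have "(a, c) \<in> ?Q" using a cP 2 kc KA KC by (intro lexI2) auto
    moreover have "(c, b) \<in> ?Q" using cP b kc 2 by (intro lexI1) auto
    ultimately show ?thesis by (simp add: betw_def c_def)
  next
    case 3
    then have kc: "kb c = 2" using VA VB VC lc by auto
    have S: "c \<in> SW" "- a \<in> SW" "b \<in> SW" "kw c = 0" "kw (- a) = 2" using KA KB KC 3 kc by auto
    have s: "c + - a = b" by (simp add: c_def)
    have "betw q c (- a)" using RB S s by auto
    moreover have "(c, - a) \<in> q" using blk S by auto
    ultimately have "(c, b) \<in> q" unfolding betw_def s using asym tr by blast
    then have "(c, b) \<in> ?Q" using b cP 3 kc KB KC by (intro lexI2) auto
    moreover have "(a, c) \<in> ?Q" using cP a kc 3 by (intro lexI1) auto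
    ultimately show ?thesis by (simp add: betw_def c_def)
  next
    case 4
    consider "kb c = 1" | "kb c = 0" | "kb c = 2" using kb3[of c] by auto
    then show ?thesis
    proof cases
      case 1
      then show ?thesis using a b cP 4 unfolding betw_def c_def[symmetric] by (auto intro: lexI1)
    next
      case kc: 2
      have S: "- c \<in> SW" "b \<in> SW" "- a \<in> SW" "kw (- c) = 1" "kw b = 0" using KA KB KC 4 kc by auto
      have s: "- c + b = - a" by (simp add: c_def)
      have "betw q (- c) b" using RB S s by auto
      moreover have "(b, - c) \<in> q" using blk S by auto
      ultimately have "(- a, - c) \<in> q" unfolding betw_def s using asym tr by blast
      then have "(a, c) \<in> ?Q" using a cP 4 kc KA KC by (intro lexI2) auto
      moreover have "(c, b) \<in> ?Q" using cP b kc 4 by (intro lexI1) auto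
      ultimately show ?thesis by (simp add: betw_def c_def)
    next
      case kc: 3
      have S: "c \<in> SW" "- a \<in> SW" "b \<in> SW" "kw c = 0" "kw (- a) = 1" using KA KB KC 4 kc by auto
      have s: "c + - a = b" by (simp add: c_def)
      have "betw q c (- a)" using RB S s by auto
      moreover have "(c, - a) \<in> q" using blk S by auto
      ultimately have "(c, b) \<in> q" unfolding betw_def s using asym tr by blast
      then have "(c, b) \<in> ?Q" using b cP 4 kc KB KC by (intro lexI2) auto
      moreover have "(a, c) \<in> ?Q" using cP a kc 4 by (intro lexI1) auto
      ultimately show ?thesis by (simp add: betw_def c_def)
    qed
  qed
qed

end

context rsl begin

lemma sw_props: "\<forall>a\<in>SW. sw a \<in> P \<and> sb (sw a) = a" using kwP kw3 by metis
lemma sb_props: "\<forall>a\<in>P. sb a \<in> SW \<and> sw (sb a) = a" using kbP kb3 by metis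

lemma kk1: "\<forall>a\<in>P. \<forall>b\<in>P. kw (sb a) = kw (sb b) \<longleftrightarrow> kb a = kb b"
proof (intro ballI)
  fix a b assume "a \<in> P" "b \<in> P"
  then show "kw (sb a) = kw (sb b) \<longleftrightarrow> kb a = kb b"
    using kbP[of a] kbP[of b] kb3[of a] kb3[of b] by (elim disjE) auto
qed

lemma kk2: "\<forall>a\<in>SW. \<forall>b\<in>SW. kb (sw a) = kb (sw b) \<longleftrightarrow> kw a = kw b"
proof (intro ballI)
  fix a b assume "a \<in> SW" "b \<in> SW"
  then show "kb (sw a) = kb (sw b) \<longleftrightarrow> kw a = kw b"
    using kwP[of a] kwP[of b] kw3[of a] kw3[of b] by (elim disjE) auto
qed

lemma inj_sw: "inj_on sw SW" using sw_props by (metis inj_on_inverseI)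
lemma inj_sb: "inj_on sb P" using sb_props by (metis inj_on_inverseI)

lemma fwd_mem: assumes "r \<in> RO_pos R \<rho> lam" shows "induced_order R \<rho> lam r \<in> RO_w R \<rho> lam"
proof -
  have r: "strict_total_order_on P r" and blk: "\<forall>a\<in>P. \<forall>b\<in>P. kb a < kb b \<longrightarrow> (a, b) \<in> r"
    and RB: "\<forall>x\<in>P. \<forall>y\<in>P. x + y \<in> P \<longrightarrow> betw r x y"
    using assms unfolding ROpos_eq reflection_order_betw by auto
  have "strict_total_order_on SW (lexo kw sw r SW)" using lex_sto[OF r _ inj_sw] sw_props by blast
  moreover have "\<forall>a\<in>SW. \<forall>b\<in>SW. a + b \<in> SW \<longrightarrow> betw (lexo kw sw r SW) a b"
  proof (intro ballI impI)
    fix a b assume ab: "a \<in> SW" "b \<in> SW" "a + b \<in> SW"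
    show "betw (lexo kw sw r SW) a b"
    proof (cases "kw a \<le> kw b")
      case True then show ?thesis using refl_fwd[OF r blk RB] ab by blast
    next
      case False
      then have "betw (lexo kw sw r SW) b a" using refl_fwd[OF r blk RB, of b a] ab by (simp add: add.commute)
      then show ?thesis by (simp add: betw_sym)
    qed
  qed
  moreover have "\<forall>a\<in>SW. \<forall>b\<in>SW. kw a < kw b \<longrightarrow> (a, b) \<in> lexo kw sw r SW" by (auto intro: lexI1)
  ultimately show ?thesis unfolding ROw_eq ind_eq reflection_order_betw by blast
qed

lemma bwd_mem: assumes "q \<in> RO_w R \<rho> lam" shows "lexo kb sb q P \<in> RO_pos R \<rho> lam"
proof -
  have q: "strict_total_order_on SW q" and blk: "\<forall>a\<in>SW. \<forall>b\<in>SW. kw a < kw b \<longrightarrow> (a, b) \<in> q"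
    and RB: "\<forall>x\<in>SW. \<forall>y\<in>SW. x + y \<in> SW \<longrightarrow> betw q x y"
    using assms unfolding ROw_eq reflection_order_betw by auto
  have "strict_total_order_on P (lexo kb sb q P)" using lex_sto[OF q _ inj_sb] sb_props by blast
  moreover have "\<forall>a\<in>P. \<forall>b\<in>P. a + b \<in> P \<longrightarrow> betw (lexo kb sb q P) a b"
  proof (intro ballI impI)
    fix a b assume ab: "a \<in> P" "b \<in> P" "a + b \<in> P"
    show "betw (lexo kb sb q P) a b"
    proof (cases "kb a \<le> kb b")
      case True then show ?thesis using refl_bwd[OF q blk RB] ab by blast
    next
      case False
      then have "betw (lexo kb sb q P) b a" using refl_bwd[OF q blk RB, of b a] ab by (simp add: add.commute)
      then show ?thesis by (simp add: betw_sym)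
    qed
  qed
  moreover have "\<forall>a\<in>P. \<forall>b\<in>P. kb a < kb b \<longrightarrow> (a, b) \<in> lexo kb sb q P" by (auto intro: lexI1)
  ultimately show ?thesis unfolding ROpos_eq reflection_order_betw by blast
qed

lemma main: "bij_betw (induced_order R \<rho> lam) (RO_pos R \<rho> lam) (RO_w R \<rho> lam)"
proof (rule bij_betw_byWitness[where f' = "\<lambda>q. lexo kb sb q P"])
  show "\<forall>r\<in>RO_pos R \<rho> lam. lexo kb sb (induced_order R \<rho> lam r) P = r"
  proof
    fix r assume "r \<in> RO_pos R \<rho> lam"
    then have r: "strict_total_order_on P r" and blk: "\<forall>a\<in>P. \<forall>b\<in>P. kb a < kb b \<longrightarrow> (a, b) \<in> r"
      unfolding ROpos_eq reflection_order_betw by auto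
    show "lexo kb sb (induced_order R \<rho> lam r) P = r"
      unfolding ind_eq by (rule lex_roundtrip[OF r blk sb_props kk1])
  qed
  show "\<forall>q\<in>RO_w R \<rho> lam. induced_order R \<rho> lam (lexo kb sb q P) = q"
  proof
    fix q assume "q \<in> RO_w R \<rho> lam"
    then have q: "strict_total_order_on SW q" and blk: "\<forall>a\<in>SW. \<forall>b\<in>SW. kw a < kw b \<longrightarrow> (a, b) \<in> q"
      unfolding ROw_eq reflection_order_betw by auto
    show "induced_order R \<rho> lam (lexo kb sb q P) = q"
      unfolding ind_eq by (rule lex_roundtrip[OF q blk sw_props kk2])
  qed
  show "induced_order R \<rho> lam ` RO_pos R \<rho> lam \<subseteq> RO_w R \<rho> lam" using fwd_mem by blast
  show "(\<lambda>q. lexo kb sb q P) ` RO_w R \<rho> lam \<subseteq> RO_pos R \<rho> lam" using bwd_mem by blast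
qed

end

theorem proposition2p12:
  fixes R :: "'a::euclidean_space set" and \<rho> :: 'a and lam :: 'a
  assumes "root_system R" and "irreducible_rs R" and "regular_vec R \<rho>"
    and "lam \<in> weights R"
  shows "(\<forall>r\<in>RO_pos R \<rho> lam. induced_order R \<rho> lam r \<in> RO_w R \<rho> lam) \<and>
         bij_betw (induced_order R \<rho> lam) (RO_pos R \<rho> lam) (RO_w R \<rho> lam)"
proof -
  interpret rsl R \<rho> lam using assms by (unfold_locales) auto
  show ?thesis using fwd_mem main by blast
qed


end
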